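(* Let $x_a,x_b\in\mathbb{R}$ and $U=\{x\in C^1[a,b]: x(a)=x_a,\ x(b)=x_b\}$. Let $x$ be a local minimizer of $J(x)=\int_a^b L(t,x(t),{}^CD_{a+}^{\alpha,\rho}x(t))\,dt$ on $U$. If the second partial derivatives $\partial^2_{ij}L$ exist and are continuous for $i,j\in\{2,3\}$, then $$\partial^2_{33}L(t,x(t),{}^CD_{a+}^{\alpha,\rho}x(t))\ge 0\quad\text{for all } t\in[a,b].$$
   Context: Fix $0<a<b<\infty$, $\alpha\in(0,1)$, $\rho>0$. For $x\in C^1[a,b]$, ${}^CD_{a+}^{\alpha,\rho} x(t)=\frac{\rho^\alpha}{\Gamma(1-\alpha)}\, t^{1-\rho}\frac{d}{dt}\int_a^t \frac{\tau^{\rho-1}}{(t^\rho-\tau^\rho)^\alpha}[x(\tau)-x(a)]\,d\tau=\frac{\rho^\alpha}{\Gamma(1-\alpha)}\int_a^t (t^\rho-\tau^\rho)^{-\alpha}x'(\tau)\,d\tau$. For a function $f$, $D_{b-}^{\alpha,\rho} f(t)=\frac{\rho^\alpha}{\Gamma(1-\alpha)}\frac{d}{dt}\int_t^b (\tau^\rho-t^\rho)^{-\alpha}f(\tau)\,d\tau$. $\partial_i$ and $\partial^2_{ij}$ denote first and second partial derivatives with respect to the indicated arguments. $L:[a,b]\times\mathbb{R}^2\to\mathbb{R}$ is continuously differentiable with respect to its second and third arguments, and for every $x\in C^1[a,b]$ the map $t\mapsto D_{b-}^{\alpha,\rho}(\partial_3L(t,x(t),{}^CD_{a+}^{\alpha,\rho}x(t)))$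 is continuous. $C^1[a,b]$ carries the norm $\|x\|=\max|x|+\max|{}^CD_{a+}^{\alpha,\rho}x|$, and local minimizers are taken with respect to this norm. *)

theory Defs
  imports "HOL-Analysis.Analysis"
begin

definition C1_on :: "real \<Rightarrow> real \<Rightarrow> (real \<Rightarrow> real) \<Rightarrow> bool" where
  "C1_on a b x \<longleftrightarrow>
     (\<exists>x'. continuous_on {a..b} x' \<and>
           (\<forall>t\<in>{a..b}. (x has_real_derivative x' t) (at t within {a..b})))"

definition caputo_left :: "real \<Rightarrow> real \<Rightarrow> real \<Rightarrow> real \<Rightarrow> (real \<Rightarrow> real) \<Rightarrow> real \<Rightarrow> real" where
  "caputo_left a b \<alpha> \<rho> x t =
     \<rho> powr \<alpha> / Gamma (1 - \<alpha>) *
       integral {a..t} (\<lambda>\<tau>. (t powr \<rho> - \<tau> powr \<rho>) powr (- \<alpha>) * vector_derivative x (at \<tau> within {a..b}))"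

definition RL_right_primitive :: "real \<Rightarrow> real \<Rightarrow> real \<Rightarrow> (real \<Rightarrow> real) \<Rightarrow> real \<Rightarrow> real" where
  "RL_right_primitive b \<alpha> \<rho> f s =
     \<rho> powr \<alpha> / Gamma (1 - \<alpha>) * integral {s..b} (\<lambda>\<tau>. (\<tau> powr \<rho> - s powr \<rho>) powr (- \<alpha>) * f \<tau>)"

definition RL_right :: "real \<Rightarrow> real \<Rightarrow> real \<Rightarrow> real \<Rightarrow> (real \<Rightarrow> real) \<Rightarrow> real \<Rightarrow> real" where
  "RL_right a b \<alpha> \<rho> f t = vector_derivative (RL_right_primitive b \<alpha> \<rho> f) (at t within {a..b})"

definition RL_right_continuous :: "real \<Rightarrow> real \<Rightarrow> real \<Rightarrow> real \<Rightarrow> (real \<Rightarrow> real) \<Rightarrow> bool" where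
  "RL_right_continuous a b \<alpha> \<rho> f \<longleftrightarrow>
     (\<forall>t\<in>{a..b}. RL_right_primitive b \<alpha> \<rho> f differentiable (at t within {a..b})) \<and>
     continuous_on {a..b} (RL_right a b \<alpha> \<rho> f)"

definition J_fun :: "real \<Rightarrow> real \<Rightarrow> real \<Rightarrow> real \<Rightarrow> (real \<Rightarrow> real \<Rightarrow> real \<Rightarrow> real) \<Rightarrow> (real \<Rightarrow> real) \<Rightarrow> real" where
  "J_fun a b \<alpha> \<rho> L x = integral {a..b} (\<lambda>t. L t (x t) (caputo_left a b \<alpha> \<rho> x t))"

definition frac_norm :: "real \<Rightarrow> real \<Rightarrow> real \<Rightarrow> real \<Rightarrow> (real \<Rightarrow> real) \<Rightarrow> real" where
  "frac_norm a b \<alpha> \<rho> x = (SUP t\<in>{a..b}. \<bar>x t\<bar>) + (SUP t\<in>{a..b}. \<bar>caputo_left a b \<alpha> \<rho> x t\<bar>)"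

definition U_set :: "real \<Rightarrow> real \<Rightarrow> real \<Rightarrow> real \<Rightarrow> (real \<Rightarrow> real) set" where
  "U_set a b xa xb = {x. C1_on a b x \<and> x a = xa \<and> x b = xb}"

definition local_minimizer :: "real \<Rightarrow> real \<Rightarrow> real \<Rightarrow> real \<Rightarrow> (real \<Rightarrow> real \<Rightarrow> real \<Rightarrow> real)
     \<Rightarrow> (real \<Rightarrow> real) set \<Rightarrow> (real \<Rightarrow> real) \<Rightarrow> bool" where
  "local_minimizer a b \<alpha> \<rho> L U x \<longleftrightarrow> x \<in> U \<and>
     (\<exists>\<epsilon>>0. \<forall>y\<in>U. frac_norm a b \<alpha> \<rho> (\<lambda>t. y t - x t) < \<epsilon> \<longrightarrow> J_fun a b \<alpha> \<rho> L x \<le> J_fun a b \<alpha> \<rho> L y)"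

end

theory Submission
  imports Defs
begin

locale kern =
  fixes a b \<alpha> \<rho> :: real
  assumes pos: "0 < a" "a < b" "0 < \<alpha>" "\<alpha> < 1" "0 < \<rho>"
begin

definition K :: "real \<Rightarrow> real \<Rightarrow> real" where
  "K t \<tau> = (t powr \<rho> - \<tau> powr \<rho>) powr (- \<alpha>)"

definition mm where "mm = \<rho> * min (a powr (\<rho>-1)) (b powr (\<rho>-1))"
definition MM where "MM = \<rho> * max (a powr (\<rho>-1)) (b powr (\<rho>-1))"

lemma mm_pos: "mm > 0" using pos by (simp add: mm_def)
lemma MM_pos: "MM > 0" using pos by (simp add: MM_def less_max_iff_disj)

lemma powr_between:
  assumes "a \<le> z" "z \<le> b"
  shows "min (a powr (\<rho>-1)) (b powr (\<rho>-1)) \<le> z powr (\<rho>-1)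
       \<and> z powr (\<rho>-1) \<le> max (a powr (\<rho>-1)) (b powr (\<rho>-1))"
proof (cases "\<rho> - 1 \<ge> 0")
  case True
  then have "a powr (\<rho>-1) \<le> z powr (\<rho>-1)" "z powr (\<rho>-1) \<le> b powr (\<rho>-1)"
    using assms pos by (auto intro!: powr_mono2)
  then show ?thesis by linarith
next
  case False
  then have "a powr (\<rho>-1) \<ge> z powr (\<rho>-1)" "z powr (\<rho>-1) \<ge> b powr (\<rho>-1)"
    using assms pos by (auto intro!: powr_mono2')
  then show ?thesis by linarith
qed

lemma pow_diff:
  assumes "a \<le> \<tau>" "\<tau> \<le> t" "t \<le> b"
  shows "mm * (t - \<tau>) \<le> t powr \<rho> - \<tau> powr \<rho> \<and> t powr \<rho> - \<tau> powr \<rho> \<le> MM * (t - \<tau>)"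
proof (cases "\<tau> = t")
  case True then show ?thesis by simp
next
  case False
  then have lt: "\<tau> < t" using assms by simp
  have "\<exists>z. \<tau> < z \<and> z < t \<and> t powr \<rho> - \<tau> powr \<rho> = (t - \<tau>) * (\<rho> * z powr (\<rho> - 1))"
    by (rule MVT2[OF lt]) (use assms pos in \<open>auto intro!: has_real_derivative_powr\<close>)
  then obtain z where z: "\<tau> < z" "z < t" "t powr \<rho> - \<tau> powr \<rho> = (t - \<tau>) * (\<rho> * z powr (\<rho> - 1))"
    by blast
  have zb: "min (a powr (\<rho>-1)) (b powr (\<rho>-1)) \<le> z powr (\<rho>-1)"
     "z powr (\<rho>-1) \<le> max (a powr (\<rho>-1)) (b powr (\<rho>-1))"
    using powr_between[of z] z assms by auto
  have "(t - \<tau>) * (\<rho> * min (a powr (\<rho>-1)) (b powr (\<rho>-1))) \<le> (t - \<tau>) * (\<rho> * z powr (\<rho> - 1))"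
    using zb lt pos by (intro mult_left_mono) auto
  moreover have "(t - \<tau>) * (\<rho> * z powr (\<rho> - 1)) \<le> (t - \<tau>) * (\<rho> * max (a powr (\<rho>-1)) (b powr (\<rho>-1)))"
    using zb lt pos by (intro mult_left_mono) auto
  ultimately show ?thesis using z unfolding mm_def MM_def by (simp add: algebra_simps)
qed

lemma K_nonneg: "K t \<tau> \<ge> 0" by (simp add: K_def)

lemma K_le:
  assumes "a \<le> \<tau>" "\<tau> \<le> t" "t \<le> b"
  shows "K t \<tau> \<le> mm powr (-\<alpha>) * (t - \<tau>) powr (-\<alpha>)"
proof (cases "\<tau> = t")
  case True then show ?thesis by (simp add: K_def)
next
  case False
  then have lt: "\<tau> < t" using assms by simp
  have "mm * (t - \<tau>) \<le> t powr \<rho> - \<tau> powr \<rho>" using pow_diff assms by blast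
  moreover have "mm * (t - \<tau>) > 0" using mm_pos lt by simp
  ultimately have "(t powr \<rho> - \<tau> powr \<rho>) powr (-\<alpha>) \<le> (mm * (t - \<tau>)) powr (-\<alpha>)"
    using pos by (intro powr_mono2') auto
  then show ?thesis using mm_pos lt by (simp add: K_def powr_mult)
qed

lemma K_ge:
  assumes "a \<le> \<tau>" "\<tau> < t" "t \<le> b"
  shows "K t \<tau> \<ge> MM powr (-\<alpha>) * (t - \<tau>) powr (-\<alpha>)"
proof -
  have "t powr \<rho> - \<tau> powr \<rho> \<le> MM * (t - \<tau>)" using pow_diff assms by auto
  moreover have "t powr \<rho> - \<tau> powr \<rho> > 0" using assms pos by (simp add: powr_less_mono2)
  ultimately have "(t powr \<rho> - \<tau> powr \<rho>) powr (-\<alpha>) \<ge> (MM * (t - \<tau>)) powr (-\<alpha>)"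
    using pos by (intro powr_mono2') auto
  then show ?thesis using MM_pos assms by (simp add: K_def powr_mult)
qed

lemma K_mono:
  assumes "a \<le> \<tau>" "\<tau> \<le> \<sigma>" "\<sigma> < t"
  shows "K t \<tau> \<le> K t \<sigma>"
proof -
  have "\<tau> powr \<rho> \<le> \<sigma> powr \<rho>" using assms pos by (intro powr_mono2) auto
  moreover have "t powr \<rho> - \<sigma> powr \<rho> > 0" using assms pos by (simp add: powr_less_mono2)
  ultimately show ?thesis unfolding K_def using pos by (intro powr_mono2') auto
qed

lemma has_integral_sing:
  assumes "u \<le> t"
  shows "((\<lambda>\<tau>. (t - \<tau>) powr (-\<alpha>)) has_integral (t - u) powr (1 - \<alpha>) / (1 - \<alpha>)) {u..t}"
proof -
  have "((\<lambda>x. x powr (-\<alpha>)) has_integral ((t-u) powr (-\<alpha>+1) / (-\<alpha>+1))) {0..t-u}"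
    using pos assms by (intro has_integral_powr_from_0) auto
  from has_integral_affinity[OF this[unfolded interval_cbox], of "-1" t]
  show ?thesis by (simp add: algebra_simps)
qed

lemma K_meas: "(\<lambda>\<tau>. K t \<tau>) \<in> borel_measurable (lebesgue_on S)"
proof -
  have i: "(\<lambda>\<tau>. \<tau>) \<in> borel_measurable (lebesgue_on S)"
    using id_borel_measurable_lebesgue_on by (simp add: id_def)
  show ?thesis unfolding K_def
    by (intro powr_real_measurable borel_measurable_diff i measurable_const) auto
qed

lemma Kf_integrable:
  assumes "a \<le> u" "u \<le> t" "t \<le> b" "continuous_on {u..t} f" "\<And>\<tau>. \<tau> \<in> {u..t} \<Longrightarrow> \<bar>f \<tau>\<bar> \<le> B"
  shows "(\<lambda>\<tau>. K t \<tau> * f \<tau>) integrable_on {u..t}"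
    and "\<bar>integral {u..t} (\<lambda>\<tau>. K t \<tau> * f \<tau>)\<bar> \<le> B * mm powr (-\<alpha>) * ((t - u) powr (1 - \<alpha>) / (1 - \<alpha>))"
proof -
  have meas: "(\<lambda>\<tau>. K t \<tau> * f \<tau>) \<in> borel_measurable (lebesgue_on {u..t})"
    using assms(4) by (intro borel_measurable_times K_meas continuous_imp_measurable_on_sets_lebesgue) auto
  have gi: "((\<lambda>\<tau>. B * mm powr (-\<alpha>) * (t - \<tau>) powr (-\<alpha>)) has_integral
      B * mm powr (-\<alpha>) * ((t - u) powr (1 - \<alpha>) / (1 - \<alpha>))) {u..t}"
    using has_integral_sing[OF assms(2)] by (intro has_integral_mult_right)
  have bd: "\<bar>K t \<tau> * f \<tau>\<bar> \<le> B * mm powr (-\<alpha>) * (t - \<tau>) powr (-\<alpha>)" if "\<tau> \<in> {u..t}" for \<tau>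
  proof -
    have "\<bar>K t \<tau> * f \<tau>\<bar> = K t \<tau> * \<bar>f \<tau>\<bar>" by (simp add: abs_mult K_nonneg)
    also have "\<dots> \<le> (mm powr (-\<alpha>) * (t - \<tau>) powr (-\<alpha>)) * B"
      using that assms K_le[of \<tau> t] K_nonneg by (intro mult_mono) auto
    finally show ?thesis by (simp add: algebra_simps)
  qed
  show int: "(\<lambda>\<tau>. K t \<tau> * f \<tau>) integrable_on {u..t}"
    by (rule measurable_bounded_by_integrable_imp_integrable_real[OF meas _ bd])
       (use gi in \<open>auto simp: has_integral_iff\<close>)
  have "\<bar>integral {u..t} (\<lambda>\<tau>. K t \<tau> * f \<tau>)\<bar> \<le> integral {u..t} (\<lambda>\<tau>. B * mm powr (-\<alpha>) * (t - \<tau>) powr (-\<alpha>))"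
    using integral_norm_bound_integral[OF int, of "\<lambda>\<tau>. B * mm powr (-\<alpha>) * (t - \<tau>) powr (-\<alpha>)"] gi bd
    by (auto simp: has_integral_iff)
  then show "\<bar>integral {u..t} (\<lambda>\<tau>. K t \<tau> * f \<tau>)\<bar> \<le> B * mm powr (-\<alpha>) * ((t - u) powr (1 - \<alpha>) / (1 - \<alpha>))"
    using gi by (simp add: has_integral_iff)
qed

lemma subst01:
  assumes "a \<le> t" "(F has_integral i) {a..t}"
  shows "((\<lambda>\<theta>. (t - a) * F (a + (t - a) * \<theta>)) has_integral i) {0..1}"
proof (cases "t = a")
  case True
  then have "i = 0" using assms by (metis atLeastAtMost_singleton has_integral_refl(2) has_integral_unique)
  then show ?thesis using True by simp
next
  case False
  then have ta: "t - a > 0" using assms by simp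
  from has_integral_affinity[OF assms(2)[unfolded interval_cbox], of "t - a" a]
  have "((\<lambda>x. F ((t - a) * x + a)) has_integral (1 / (t - a)) * i)
          ((\<lambda>x. (1 / (t - a)) * x + - (1 / (t - a) * a)) ` cbox a t)"
    using ta by simp
  moreover have "(\<lambda>x. (1 / (t - a)) * x + - (1 / (t - a) * a)) ` cbox a t = {0..1}"
  proof -
    have "(\<lambda>x. (1 / (t - a)) * x + - (1 / (t - a) * a)) ` {a..t} = {(1 / (t - a)) * a + - (1 / (t - a) * a) .. (1 / (t - a)) * t + - (1 / (t - a) * a)}"
      using ta by (subst image_affinity_atLeastAtMost) auto
    also have "\<dots> = {0..1}"
    proof -
      have nz: "t - a \<noteq> 0" using ta by simp
      have "t/(t-a) - a/(t-a) = (t-a)/(t-a)" by (rule diff_divide_distrib[symmetric])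
      then have h1: "t/(t-a) - a/(t-a) = 1" using nz by (metis divide_self)
      show ?thesis using ta h1 by simp
    qed
    finally show ?thesis by simp
  qed
  ultimately have "((\<lambda>x. F ((t - a) * x + a)) has_integral (1 / (t - a)) * i) {0..1}" by simp
  from has_integral_mult_right[OF this, of "t - a"]
  have "((\<lambda>x. (t - a) * F ((t - a) * x + a)) has_integral i) {0..1}"
    using ta by simp
  then show ?thesis by (simp add: add.commute)
qed

lemma K_diag [simp]: "K t t = 0" by (simp add: K_def)

lemma cont_bound:
  fixes f :: "real \<Rightarrow> real"
  assumes "continuous_on {a..b} f"
  obtains B where "B \<ge> 0" "\<And>\<tau>. \<tau> \<in> {a..b} \<Longrightarrow> \<bar>f \<tau>\<bar> \<le> B"
proof -
  have "bounded (f ` {a..b})" using assms compact_continuous_image compact_imp_bounded by blast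
  then obtain B where "\<forall>x\<in>f ` {a..b}. norm x \<le> B" unfolding bounded_iff by blast
  then have "\<And>\<tau>. \<tau> \<in> {a..b} \<Longrightarrow> \<bar>f \<tau>\<bar> \<le> B" by auto
  moreover have "B \<ge> 0" using calculation[of a] pos by auto
  ultimately show ?thesis using that by blast
qed

lemma h_bound:
  fixes f :: "real \<Rightarrow> real"
  assumes "t \<in> {a..b}" "\<theta> \<in> {0..1}" "\<And>\<tau>. \<tau> \<in> {a..b} \<Longrightarrow> \<bar>f \<tau>\<bar> \<le> B"
  shows "\<bar>(t - a) * (K t (a + (t-a)*\<theta>) * f (a + (t-a)*\<theta>))\<bar>
     \<le> B * mm powr (-\<alpha>) * (t - a) powr (1 - \<alpha>) * (1 - \<theta>) powr (-\<alpha>)"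
proof (cases "t = a \<or> \<theta> = 1")
  case True
  have B0: "B \<ge> 0" using assms(3)[of a] pos by auto
  from True show ?thesis using B0 by auto
next
  case False
  then have ta: "t > a" and th: "\<theta> < 1" using assms by auto
  define \<tau> where "\<tau> = a + (t-a)*\<theta>"
  have "(t-a)*\<theta> \<le> (t-a)" using ta th by (intro mult_left_le) auto
  moreover have "(t-a)*\<theta> \<ge> 0" using ta assms by auto
  ultimately have tau: "a \<le> \<tau>" "\<tau> \<le> t" unfolding \<tau>_def by linarith+
  have td: "t - \<tau> = (t - a) * (1 - \<theta>)" by (simp add: \<tau>_def algebra_simps)
  have "\<bar>(t - a) * (K t \<tau> * f \<tau>)\<bar> = (t - a) * K t \<tau> * \<bar>f \<tau>\<bar>"
    using ta by (simp add: abs_mult K_nonneg)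
  also have "\<dots> \<le> (t - a) * (mm powr (-\<alpha>) * (t - \<tau>) powr (-\<alpha>)) * B"
    using tau assms K_le[of \<tau> t] ta K_nonneg
    by (intro mult_mono mult_left_mono) auto
  also have "(t - \<tau>) powr (-\<alpha>) = (t - a) powr (-\<alpha>) * (1 - \<theta>) powr (-\<alpha>)"
    using ta th by (simp add: td powr_mult)
  also have "(t - a) * (mm powr (-\<alpha>) * ((t - a) powr (-\<alpha>) * (1 - \<theta>) powr (-\<alpha>))) * B
      = B * mm powr (-\<alpha>) * ((t - a) * (t - a) powr (-\<alpha>)) * (1 - \<theta>) powr (-\<alpha>)"
    by (simp add: algebra_simps)
  also have "(t - a) * (t - a) powr (-\<alpha>) = (t - a) powr (1 - \<alpha>)"
  proof -
    have "(t - a) powr (1 - \<alpha>) = (t - a) powr (1 + (-\<alpha>))" by simp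
    also have "\<dots> = (t - a) powr 1 * (t - a) powr (-\<alpha>)" by (rule powr_add)
    finally show ?thesis using ta by simp
  qed
  finally show ?thesis by (simp add: \<tau>_def)
qed

lemma Kf_cont:
  assumes f: "continuous_on {a..b} f"
  shows "continuous_on {a..b} (\<lambda>t. integral {a..t} (\<lambda>\<tau>. K t \<tau> * f \<tau>))"
proof -
  obtain B where B0: "B \<ge> 0" and B: "\<And>\<tau>. \<tau> \<in> {a..b} \<Longrightarrow> \<bar>f \<tau>\<bar> \<le> B"
    using cont_bound[OF f] by blast
  define h where "h t \<theta> = (t - a) * (K t (a + (t-a)*\<theta>) * f (a + (t-a)*\<theta>))" for t \<theta>
  have eq: "(h t has_integral integral {a..t} (\<lambda>\<tau>. K t \<tau> * f \<tau>)) {0..1}" if "t \<in> {a..b}" for t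
  proof -
    have "(\<lambda>\<tau>. K t \<tau> * f \<tau>) integrable_on {a..t}"
      using that B f by (intro Kf_integrable(1)[where B=B]) (auto intro: continuous_on_subset)
    then show ?thesis unfolding h_def using that by (intro subst01) (auto simp: has_integral_integral)
  qed
  define g where "g \<theta> = B * mm powr (-\<alpha>) * (b - a) powr (1 - \<alpha>) * (1 - \<theta>) powr (-\<alpha>)" for \<theta>
  have gint: "g integrable_on {0..1}"
  proof -
    have "(\<lambda>\<theta>. (1 - \<theta>) powr (-\<alpha>)) integrable_on {0..1}"
      using has_integral_sing[of 0 1, simplified] by (rule has_integral_integrable)
    from integrable_on_cmult_left[OF this, of "B * mm powr (-\<alpha>) * (b - a) powr (1 - \<alpha>)"]
    show ?thesis unfolding g_def by simp
  qed
  have hb: "\<bar>h t \<theta>\<bar> \<le> g \<theta>" if "t \<in> {a..b}" "\<theta> \<in> {0..1}" for t \<theta>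
  proof -
    have "\<bar>h t \<theta>\<bar> \<le> B * mm powr (-\<alpha>) * (t - a) powr (1 - \<alpha>) * (1 - \<theta>) powr (-\<alpha>)"
      unfolding h_def using h_bound[of t \<theta> f B] that B by blast
    also have "\<dots> \<le> g \<theta>" unfolding g_def using that B0 pos mm_pos
      by (intro mult_right_mono mult_left_mono powr_mono2) auto
    finally show ?thesis .
  qed
  show ?thesis
  proof (rule continuous_on_sequentiallyI)
    fix u t0 assume u: "\<forall>n. u n \<in> {a..b}" and t0: "t0 \<in> {a..b}" and lim: "u \<longlonglongrightarrow> t0"
    have conv: "(\<lambda>k. h (u k) \<theta>) \<longlonglongrightarrow> h t0 \<theta>" if th: "\<theta> \<in> {0..1}" for \<theta>
    proof (cases "\<theta> = 1")
      case True then show ?thesis by (simp add: h_def)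
    next
      case False
      then have th1: "\<theta> < 1" using th by auto
      show ?thesis
      proof (cases "t0 = a")
        case True
        have h0: "h t0 \<theta> = 0" using True by (simp add: h_def)
        have "(\<lambda>k. B * mm powr (-\<alpha>) * (u k - a) powr (1 - \<alpha>) * (1 - \<theta>) powr (-\<alpha>)) \<longlonglongrightarrow>
              B * mm powr (-\<alpha>) * (t0 - a) powr (1 - \<alpha>) * (1 - \<theta>) powr (-\<alpha>)"
          using pos u by (intro tendsto_intros lim) auto
        then have "(\<lambda>k. B * mm powr (-\<alpha>) * (u k - a) powr (1 - \<alpha>) * (1 - \<theta>) powr (-\<alpha>)) \<longlonglongrightarrow> 0"
          using True pos by simp
        then have "(\<lambda>k. h (u k) \<theta>) \<longlonglongrightarrow> 0"
        proof (rule Lim_null_comparison[rotated])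
          show "\<forall>\<^sub>F k in sequentially. norm (h (u k) \<theta>) \<le> B * mm powr (-\<alpha>) * (u k - a) powr (1 - \<alpha>) * (1 - \<theta>) powr (-\<alpha>)"
            using h_bound[of _ \<theta> f B] u th B unfolding h_def by (intro always_eventually allI) auto
        qed
        then show ?thesis using h0 by simp
      next
        case False
        then have ta: "t0 > a" using t0 by auto
        define \<tau>0 where "\<tau>0 = a + (t0 - a) * \<theta>"
        have "(t0 - a) * \<theta> < (t0 - a)" using mult_strict_left_mono[of \<theta> 1 "t0-a"] ta th1 by simp
        moreover have "(t0 - a) * \<theta> \<ge> 0" using ta th by auto
        ultimately have tau0: "a \<le> \<tau>0" "\<tau>0 < t0" unfolding \<tau>0_def by linarith+
        have tl: "(\<lambda>k. a + (u k - a) * \<theta>) \<longlonglongrightarrow> \<tau>0" unfolding \<tau>0_def by (intro tendsto_intros lim)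
        have inab: "a + (s - a) * \<theta> \<in> {a..b}" if "s \<in> {a..b}" for s
        proof -
          have "(s - a) * \<theta> \<le> (s - a) * 1" using that th by (intro mult_left_mono) auto
          then show ?thesis using that th by auto
        qed
        have fl: "(\<lambda>k. f (a + (u k - a) * \<theta>)) \<longlonglongrightarrow> f \<tau>0"
          by (rule continuous_on_tendsto_compose[OF f tl]) (use inab t0 u in \<open>auto simp: \<tau>0_def\<close>)
        have pp: "t0 powr \<rho> - \<tau>0 powr \<rho> \<noteq> 0"
          using tau0 pos powr_less_mono2[of \<rho> \<tau>0 t0] by auto
        have Kl: "(\<lambda>k. (u k powr \<rho> - (a + (u k - a) * \<theta>) powr \<rho>) powr (-\<alpha>)) \<longlonglongrightarrow> (t0 powr \<rho> - \<tau>0 powr \<rho>) powr (-\<alpha>)"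
          using pp ta tau0 pos by (intro tendsto_powr tendsto_diff tl lim tendsto_const) auto
        have "(\<lambda>k. (u k - a) * ((u k powr \<rho> - (a + (u k - a) * \<theta>) powr \<rho>) powr (-\<alpha>) * f (a + (u k - a) * \<theta>)))
            \<longlonglongrightarrow> (t0 - a) * ((t0 powr \<rho> - \<tau>0 powr \<rho>) powr (-\<alpha>) * f \<tau>0)"
          by (intro tendsto_intros Kl fl lim)
        then show ?thesis by (simp add: h_def K_def \<tau>0_def mult.commute)
      qed
    qed
    have "(\<lambda>k. integral {0..1} (h (u k))) \<longlonglongrightarrow> integral {0..1} (h t0)"
      by (rule dominated_convergence(2)[OF _ gint, of "\<lambda>k. h (u k)"])
         (use eq u hb conv in \<open>auto simp: has_integral_integrable\<close>)
    moreover have "integral {0..1} (h (u k)) = integral {a..u k} (\<lambda>\<tau>. K (u k) \<tau> * f \<tau>)" for k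
      using eq u by (simp add: integral_unique)
    moreover have "integral {0..1} (h t0) = integral {a..t0} (\<lambda>\<tau>. K t0 \<tau> * f \<tau>)"
      using eq t0 by (simp add: integral_unique)
    ultimately show "(\<lambda>n. integral {a..u n} (\<lambda>\<tau>. K (u n) \<tau> * f \<tau>)) \<longlonglongrightarrow> integral {a..t0} (\<lambda>\<tau>. K t0 \<tau> * f \<tau>)"
      by simp
  qed
qed

definition cc where "cc = \<rho> powr \<alpha> / Gamma (1 - \<alpha>)"

lemma cc_pos: "cc > 0" using pos by (simp add: cc_def)

definition Cb where "Cb = cc * mm powr (-\<alpha>) * ((b - a) powr (1 - \<alpha>) / (1 - \<alpha>))"

lemma Cb_nonneg: "Cb \<ge> 0" using cc_pos mm_pos pos by (simp add: Cb_def)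

lemma caputo_eq:
  assumes y': "\<And>\<tau>. \<tau> \<in> {a..b} \<Longrightarrow> (y has_real_derivative y' \<tau>) (at \<tau> within {a..b})"
    and t: "t \<in> {a..b}"
  shows "caputo_left a b \<alpha> \<rho> y t = cc * integral {a..t} (\<lambda>\<tau>. K t \<tau> * y' \<tau>)"
proof -
  have "integral {a..t} (\<lambda>\<tau>. (t powr \<rho> - \<tau> powr \<rho>) powr (- \<alpha>) * vector_derivative y (at \<tau> within {a..b}))
      = integral {a..t} (\<lambda>\<tau>. K t \<tau> * y' \<tau>)"
  proof (rule integral_cong)
    fix \<tau> assume "\<tau> \<in> {a..t}"
    then have tau: "\<tau> \<in> {a..b}" using t by auto
    have "vector_derivative y (at \<tau> within {a..b}) = y' \<tau>"
      using y'[OF tau] pos tau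
      by (intro vector_derivative_within_closed_interval) (auto simp: has_real_derivative_iff_has_vector_derivative)
    then show "(t powr \<rho> - \<tau> powr \<rho>) powr (- \<alpha>) * vector_derivative y (at \<tau> within {a..b}) = K t \<tau> * y' \<tau>"
      by (simp add: K_def)
  qed
  then show ?thesis unfolding caputo_left_def cc_def by simp
qed

lemma caputo_props:
  assumes y'c: "continuous_on {a..b} y'"
    and y': "\<And>\<tau>. \<tau> \<in> {a..b} \<Longrightarrow> (y has_real_derivative y' \<tau>) (at \<tau> within {a..b})"
  shows "continuous_on {a..b} (caputo_left a b \<alpha> \<rho> y)"
    and "\<And>t B. t \<in> {a..b} \<Longrightarrow> (\<And>\<tau>. \<tau> \<in> {a..b} \<Longrightarrow> \<bar>y' \<tau>\<bar> \<le> B) \<Longrightarrow> \<bar>caputo_left a b \<alpha> \<rho> y t\<bar> \<le> B * Cb"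
    and "\<And>t. t \<in> {a..b} \<Longrightarrow> (\<lambda>\<tau>. K t \<tau> * y' \<tau>) integrable_on {a..t}"
proof -
  have "continuous_on {a..b} (\<lambda>t. cc * integral {a..t} (\<lambda>\<tau>. K t \<tau> * y' \<tau>))"
    by (intro continuous_intros Kf_cont y'c)
  then show "continuous_on {a..b} (caputo_left a b \<alpha> \<rho> y)"
    by (rule continuous_on_eq) (use caputo_eq[OF y'] in auto)
  obtain B0 where "\<And>\<tau>. \<tau> \<in> {a..b} \<Longrightarrow> \<bar>y' \<tau>\<bar> \<le> B0" using cont_bound[OF y'c] by blast
  then show "(\<lambda>\<tau>. K t \<tau> * y' \<tau>) integrable_on {a..t}" if "t \<in> {a..b}" for t
    using that y'c by (intro Kf_integrable(1)[where B=B0]) (auto intro: continuous_on_subset)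
  fix t B assume t: "t \<in> {a..b}" and B: "\<And>\<tau>. \<tau> \<in> {a..b} \<Longrightarrow> \<bar>y' \<tau>\<bar> \<le> B"
  have "\<bar>integral {a..t} (\<lambda>\<tau>. K t \<tau> * y' \<tau>)\<bar> \<le> B * mm powr (-\<alpha>) * ((t - a) powr (1 - \<alpha>) / (1 - \<alpha>))"
    using t B y'c by (intro Kf_integrable(2)) (auto intro: continuous_on_subset)
  also have "\<dots> \<le> B * mm powr (-\<alpha>) * ((b - a) powr (1 - \<alpha>) / (1 - \<alpha>))"
    using t pos mm_pos B[of a]
    by (intro mult_left_mono divide_right_mono powr_mono2) auto
  finally have "cc * \<bar>integral {a..t} (\<lambda>\<tau>. K t \<tau> * y' \<tau>)\<bar> \<le> cc * (B * mm powr (-\<alpha>) * ((b - a) powr (1 - \<alpha>) / (1 - \<alpha>)))"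
    using cc_pos by (intro mult_left_mono) auto
  moreover have "\<bar>caputo_left a b \<alpha> \<rho> y t\<bar> = cc * \<bar>integral {a..t} (\<lambda>\<tau>. K t \<tau> * y' \<tau>)\<bar>"
    using caputo_eq[OF y' t] cc_pos by (simp add: abs_mult)
  ultimately show "\<bar>caputo_left a b \<alpha> \<rho> y t\<bar> \<le> B * Cb"
    by (simp add: Cb_def algebra_simps)
qed

lemma caputo_lin:
  assumes y'c: "continuous_on {a..b} y'" and y': "\<And>\<tau>. \<tau> \<in> {a..b} \<Longrightarrow> (y has_real_derivative y' \<tau>) (at \<tau> within {a..b})"
    and z'c: "continuous_on {a..b} z'" and z': "\<And>\<tau>. \<tau> \<in> {a..b} \<Longrightarrow> (z has_real_derivative z' \<tau>) (at \<tau> within {a..b})"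
    and t: "t \<in> {a..b}"
  shows "caputo_left a b \<alpha> \<rho> (\<lambda>t. y t + s * z t) t = caputo_left a b \<alpha> \<rho> y t + s * caputo_left a b \<alpha> \<rho> z t"
proof -
  have d: "((\<lambda>t. y t + s * z t) has_real_derivative y' \<tau> + s * z' \<tau>) (at \<tau> within {a..b})" if "\<tau> \<in> {a..b}" for \<tau>
    using y'[OF that] z'[OF that] by (auto intro!: derivative_eq_intros)
  have iy: "(\<lambda>\<tau>. K t \<tau> * y' \<tau>) integrable_on {a..t}" by (rule caputo_props(3)[OF y'c y' t])
  have iz: "(\<lambda>\<tau>. K t \<tau> * z' \<tau>) integrable_on {a..t}" by (rule caputo_props(3)[OF z'c z' t])
  have "integral {a..t} (\<lambda>\<tau>. K t \<tau> * (y' \<tau> + s * z' \<tau>))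
      = integral {a..t} (\<lambda>\<tau>. K t \<tau> * y' \<tau> + s * (K t \<tau> * z' \<tau>))"
    by (simp add: algebra_simps)
  also have "\<dots> = integral {a..t} (\<lambda>\<tau>. K t \<tau> * y' \<tau>) + s * integral {a..t} (\<lambda>\<tau>. K t \<tau> * z' \<tau>)"
  proof -
    have "(\<lambda>\<tau>. s * (K t \<tau> * z' \<tau>)) integrable_on {a..t}"
      using integrable_on_cmult_left[OF iz, of s] by simp
    then have "integral {a..t} (\<lambda>\<tau>. K t \<tau> * y' \<tau> + s * (K t \<tau> * z' \<tau>)) =
       integral {a..t} (\<lambda>\<tau>. K t \<tau> * y' \<tau>) + integral {a..t} (\<lambda>\<tau>. s * (K t \<tau> * z' \<tau>))"
      by (rule integral_add[OF iy])
    then show ?thesis by simp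
  qed
  finally have I: "integral {a..t} (\<lambda>\<tau>. K t \<tau> * (y' \<tau> + s * z' \<tau>)) =
     integral {a..t} (\<lambda>\<tau>. K t \<tau> * y' \<tau>) + s * integral {a..t} (\<lambda>\<tau>. K t \<tau> * z' \<tau>)" .
  have e1: "caputo_left a b \<alpha> \<rho> (\<lambda>t. y t + s * z t) t = cc * integral {a..t} (\<lambda>\<tau>. K t \<tau> * (y' \<tau> + s * z' \<tau>))"
    by (rule caputo_eq[OF d t])
  have e2: "caputo_left a b \<alpha> \<rho> y t = cc * integral {a..t} (\<lambda>\<tau>. K t \<tau> * y' \<tau>)"
    by (rule caputo_eq[OF y' t])
  have e3: "caputo_left a b \<alpha> \<rho> z t = cc * integral {a..t} (\<lambda>\<tau>. K t \<tau> * z' \<tau>)"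
    by (rule caputo_eq[OF z' t])
  show ?thesis unfolding e1 I e2 e3 by (simp add: algebra_simps)
qed

lemma caputo_scale:
  assumes z': "\<And>\<tau>. \<tau> \<in> {a..b} \<Longrightarrow> (z has_real_derivative z' \<tau>) (at \<tau> within {a..b})"
    and t: "t \<in> {a..b}"
  shows "caputo_left a b \<alpha> \<rho> (\<lambda>t. s * z t) t = s * caputo_left a b \<alpha> \<rho> z t"
proof -
  have d: "((\<lambda>t. s * z t) has_real_derivative s * z' \<tau>) (at \<tau> within {a..b})" if "\<tau> \<in> {a..b}" for \<tau>
    using z'[OF that] by (auto intro!: derivative_eq_intros)
  have e1: "caputo_left a b \<alpha> \<rho> (\<lambda>t. s * z t) t = cc * integral {a..t} (\<lambda>\<tau>. K t \<tau> * (s * z' \<tau>))"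
    by (rule caputo_eq[OF d t])
  have e3: "caputo_left a b \<alpha> \<rho> z t = cc * integral {a..t} (\<lambda>\<tau>. K t \<tau> * z' \<tau>)"
    by (rule caputo_eq[OF z' t])
  have "integral {a..t} (\<lambda>\<tau>. K t \<tau> * (s * z' \<tau>)) = integral {a..t} (\<lambda>\<tau>. s * (K t \<tau> * z' \<tau>))"
    by (simp add: algebra_simps)
  also have "\<dots> = s * integral {a..t} (\<lambda>\<tau>. K t \<tau> * z' \<tau>)" by (rule integral_mult_right)
  finally show ?thesis unfolding e1 e3 by simp
qed

end

lemma chain2:
  fixes F Fu Fv :: "real \<Rightarrow> real \<Rightarrow> real"
  assumes du: "\<And>u v. ((\<lambda>u. F u v) has_real_derivative Fu u v) (at u)"
    and dv: "\<And>u v. ((\<lambda>v. F u v) has_real_derivative Fv u v) (at v)"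
    and cu: "continuous_on UNIV (\<lambda>(u,v). Fu u v)"
  shows "((\<lambda>r. F (u0 + r*p) (v0 + r*q)) has_real_derivative
            Fu (u0 + r*p) (v0 + r*q) * p + Fv (u0 + r*p) (v0 + r*q) * q) (at r)"
proof -
  define G where "G v u = F u v" for v u
  let ?u = "u0 + r*p" and ?v = "v0 + r*q"
  have cb: "continuous (at (?v, ?u) within UNIV \<times> UNIV) (\<lambda>(x, y). blinfun_mult_right (Fu y x))"
  proof -
    have "continuous_on UNIV (\<lambda>(x::real, y::real). Fu y x)"
      using continuous_on_compose2[OF cu, of UNIV "\<lambda>z. (snd z, fst z)"]
      by (simp add: split_beta continuous_on_snd continuous_on_fst continuous_on_Pair)
    then have "continuous_on UNIV (\<lambda>(x::real, y::real). blinfun_mult_right (Fu y x))"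
      using bounded_linear.continuous_on[OF bounded_linear_blinfun_mult_right, of UNIV "\<lambda>(x, y). Fu y x"]
      by (simp add: split_beta)
    then show ?thesis by (simp add: continuous_on_eq_continuous_at)
  qed
  have "((\<lambda>(x, y). G x y) has_derivative (\<lambda>(tx, ty). Fv ?u ?v * tx + blinfun_mult_right (Fu ?u ?v) ty)) (at (?v, ?u) within UNIV \<times> UNIV)"
  proof (rule has_derivative_partialsI[OF _ _ cb])
    show "((\<lambda>x. G x ?u) has_derivative (*) (Fv ?u ?v)) (at ?v within UNIV)"
      using dv[of ?u ?v] by (simp add: G_def has_field_derivative_def)
    show "((\<lambda>y. G x y) has_derivative blinfun_apply (blinfun_mult_right (Fu y x))) (at y within UNIV)" for x y
      using du by (simp add: G_def has_field_derivative_def)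
  qed auto
  then have d2: "((\<lambda>(x, y). G x y) has_derivative (\<lambda>(tx, ty). Fv ?u ?v * tx + Fu ?u ?v * ty)) (at (?v, ?u))"
    by simp
  have d1: "((\<lambda>r. (v0 + r*q, u0 + r*p)) has_derivative (\<lambda>h. (h*q, h*p))) (at r)"
    by (auto intro!: derivative_eq_intros simp: algebra_simps)
  from has_derivative_compose[OF d1 d2]
  have "((\<lambda>r. F (u0 + r*p) (v0 + r*q)) has_derivative (\<lambda>h. Fv ?u ?v * (h*q) + Fu ?u ?v * (h*p))) (at r)"
    by (simp add: G_def o_def)
  then show ?thesis unfolding has_field_derivative_def
    by (rule has_derivative_eq_rhs) (auto simp: algebra_simps)
qed

lemma taylor_sym:
  fixes F Fu Fv Fuu Fuv Fvu Fvv :: "real \<Rightarrow> real \<Rightarrow> real"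
  assumes du: "\<And>u v. ((\<lambda>u. F u v) has_real_derivative Fu u v) (at u)"
    and dv: "\<And>u v. ((\<lambda>v. F u v) has_real_derivative Fv u v) (at v)"
    and duu: "\<And>u v. ((\<lambda>u. Fu u v) has_real_derivative Fuu u v) (at u)"
    and duv: "\<And>u v. ((\<lambda>v. Fu u v) has_real_derivative Fuv u v) (at v)"
    and dvu: "\<And>u v. ((\<lambda>u. Fv u v) has_real_derivative Fvu u v) (at u)"
    and dvv: "\<And>u v. ((\<lambda>v. Fv u v) has_real_derivative Fvv u v) (at v)"
    and cu: "continuous_on UNIV (\<lambda>(u,v). Fu u v)"
    and cuu: "continuous_on UNIV (\<lambda>(u,v). Fuu u v)"
    and cvu: "continuous_on UNIV (\<lambda>(u,v). Fvu u v)"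
    and s: "s > 0"
  shows "\<exists>r1 r2. r1 \<in> {-s..s} \<and> r2 \<in> {-s..s} \<and>
    F (u0 + s*p) (v0 + s*q) + F (u0 + (-s)*p) (v0 + (-s)*q) - 2 * F u0 v0 =
    s\<^sup>2 / 2 * (((Fuu (u0+r1*p) (v0+r1*q) * p + Fuv (u0+r1*p) (v0+r1*q) * q) * p
                 + (Fvu (u0+r1*p) (v0+r1*q) * p + Fvv (u0+r1*p) (v0+r1*q) * q) * q)
               + ((Fuu (u0+r2*p) (v0+r2*q) * p + Fuv (u0+r2*p) (v0+r2*q) * q) * p
                 + (Fvu (u0+r2*p) (v0+r2*q) * p + Fvv (u0+r2*p) (v0+r2*q) * q) * q))"
proof -
  define \<phi> where "\<phi> r = F (u0 + r*p) (v0 + r*q)" for r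
  define \<phi>1 where "\<phi>1 r = Fu (u0 + r*p) (v0 + r*q) * p + Fv (u0 + r*p) (v0 + r*q) * q" for r
  define \<phi>2 where "\<phi>2 r = (Fuu (u0+r*p) (v0+r*q) * p + Fuv (u0+r*p) (v0+r*q) * q) * p
                 + (Fvu (u0+r*p) (v0+r*q) * p + Fvv (u0+r*p) (v0+r*q) * q) * q" for r
  have d1: "(\<phi> has_real_derivative \<phi>1 r) (at r)" for r
    unfolding \<phi>_def \<phi>1_def by (rule chain2[OF du dv cu])
  have d2: "(\<phi>1 has_real_derivative \<phi>2 r) (at r)" for r
  proof -
    have a1: "((\<lambda>r. Fu (u0 + r*p) (v0 + r*q)) has_real_derivative
            Fuu (u0 + r*p) (v0 + r*q) * p + Fuv (u0 + r*p) (v0 + r*q) * q) (at r)"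
      by (rule chain2[OF duu duv cuu])
    have a2: "((\<lambda>r. Fv (u0 + r*p) (v0 + r*q)) has_real_derivative
            Fvu (u0 + r*p) (v0 + r*q) * p + Fvv (u0 + r*p) (v0 + r*q) * q) (at r)"
      by (rule chain2[OF dvu dvv cvu])
    show ?thesis unfolding \<phi>1_def \<phi>2_def
      using DERIV_add[OF DERIV_cmult_right[OF a1, of p] DERIV_cmult_right[OF a2, of q]] by simp
  qed
  define diff where "diff m = (if m = 0 then \<phi> else if m = 1 then \<phi>1 else \<phi>2)" for m :: nat
  have D: "\<forall>m t. m < 2 \<and> P t \<longrightarrow> DERIV (diff m) t :> diff (Suc m) t" for P :: "real \<Rightarrow> bool"
  proof (intro allI impI)
    fix m :: nat and t assume "m < 2 \<and> P t"
    then have "m = 0 \<or> m = 1" by auto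
    then show "DERIV (diff m) t :> diff (Suc m) t" using d1 d2 by (auto simp: diff_def)
  qed
  obtain r1 where r1: "0 < r1" "r1 < s" "\<phi> s = (\<Sum>m<2. diff m 0 / fact m * s ^ m) + diff 2 r1 / fact 2 * s ^ 2"
    using Maclaurin[of s 2 diff \<phi>] D s by (auto simp: diff_def)
  obtain r2 where r2: "-s < r2" "r2 < 0" "\<phi> (-s) = (\<Sum>m<2. diff m 0 / fact m * (-s) ^ m) + diff 2 r2 / fact 2 * (-s) ^ 2"
    using Maclaurin_minus[of "-s" 2 diff \<phi>] D s by (auto simp: diff_def)
  have "\<phi> s + \<phi> (-s) - 2 * \<phi> 0 = s\<^sup>2 / 2 * (\<phi>2 r1 + \<phi>2 r2)"
    using r1(3) r2(3) by (simp add: diff_def numeral_2_eq_2 algebra_simps power2_eq_square)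
  then show ?thesis using r1 r2 unfolding \<phi>_def \<phi>2_def
    by (intro exI[of _ r1] exI[of _ r2]) auto
qed

lemma unif_est:
  fixes G :: "real \<Rightarrow> real \<Rightarrow> real \<Rightarrow> real"
  assumes G: "continuous_on ({a..b} \<times> UNIV \<times> UNIV) (\<lambda>(t,u,v). G t u v)" and e: "e > 0"
  shows "\<exists>d>0. \<forall>t\<in>{a..b}. \<forall>u v u' v'. \<bar>u\<bar> \<le> R \<and> \<bar>v\<bar> \<le> R \<and> \<bar>u'\<bar> \<le> R \<and> \<bar>v'\<bar> \<le> R
      \<and> \<bar>u' - u\<bar> < d \<and> \<bar>v' - v\<bar> < d \<longrightarrow> \<bar>G t u' v' - G t u v\<bar> < e"
proof -
  define C where "C = {a..b} \<times> {-R..R} \<times> {-R..R}"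
  have "compact C" unfolding C_def by (intro compact_Times compact_Icc)
  moreover have "continuous_on C (\<lambda>(t,u,v). G t u v)"
    using G by (rule continuous_on_subset) (auto simp: C_def)
  ultimately have "uniformly_continuous_on C (\<lambda>(t,u,v). G t u v)"
    using compact_uniformly_continuous by blast
  then obtain d0 where d0: "d0 > 0" and
    uc: "\<And>z z'. z \<in> C \<Longrightarrow> z' \<in> C \<Longrightarrow> dist z' z < d0 \<Longrightarrow> dist ((\<lambda>(t,u,v). G t u v) z') ((\<lambda>(t,u,v). G t u v) z) < e"
    unfolding uniformly_continuous_on_def using e by metis
  show ?thesis
  proof (intro exI[of _ "d0 / sqrt 2"] conjI allI ballI impI)
    show "d0 / sqrt 2 > 0" using d0 by simp
    fix t u v u' v' assume t: "t \<in> {a..b}" and h: "\<bar>u\<bar> \<le> R \<and> \<bar>v\<bar> \<le> R \<and> \<bar>u'\<bar> \<le> R \<and> \<bar>v'\<bar> \<le> R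
      \<and> \<bar>u' - u\<bar> < d0 / sqrt 2 \<and> \<bar>v' - v\<bar> < d0 / sqrt 2"
    have m1: "(t, u, v) \<in> C" "(t, u', v') \<in> C" using t h by (auto simp: C_def abs_le_iff)
    have "dist (t, u', v') (t, u, v) = sqrt ((u' - u)\<^sup>2 + (v' - v)\<^sup>2)"
      by (simp add: dist_Pair_Pair dist_real_def)
    also have "\<dots> < d0" using h by (intro real_sqrt_sum_squares_less) auto
    finally have "dist (t, u', v') (t, u, v) < d0" .
    from uc[OF m1(1) m1(2) this] show "\<bar>G t u' v' - G t u v\<bar> < e" by (simp add: dist_real_def)
  qed
qed

lemma comp3:
  fixes G :: "real \<Rightarrow> real \<Rightarrow> real \<Rightarrow> real"
  assumes G: "continuous_on ({a..b} \<times> UNIV \<times> UNIV) (\<lambda>(t,u,v). G t u v)"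
    and f: "continuous_on {a..b} f" and g: "continuous_on {a..b} g"
  shows "continuous_on {a..b} (\<lambda>t. G t (f t) (g t))"
proof -
  have "continuous_on {a..b} (\<lambda>t. (t, f t, g t))" by (intro continuous_intros f g)
  from continuous_on_compose2[OF G this] show ?thesis by auto
qed

lemma cont_fix_t:
  fixes G :: "real \<Rightarrow> real \<Rightarrow> real \<Rightarrow> real"
  assumes G: "continuous_on ({a..b} \<times> UNIV \<times> UNIV) (\<lambda>(t,u,v). G t u v)" and t: "t \<in> {a..b}"
  shows "continuous_on UNIV (\<lambda>(u,v). G t u v)"
proof -
  have "continuous_on UNIV (\<lambda>z::real\<times>real. (t, fst z, snd z))" by (intro continuous_intros)
  moreover have "range (Pair t) \<subseteq> {a..b} \<times> UNIV" using t by auto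
  ultimately have "continuous_on UNIV (\<lambda>x. G (fst (Pair t x)) (fst (snd (Pair t x))) (snd (snd (Pair t x))))"
    using continuous_on_compose2[OF G, of UNIV "Pair t"] by (simp add: split_beta)
  then show ?thesis by (simp add: split_beta)
qed

lemma quad_bound:
  fixes A B C D p q e W :: real
  assumes "\<bar>A\<bar> \<le> e" "\<bar>B\<bar> \<le> e" "\<bar>C\<bar> \<le> e" "\<bar>D\<bar> \<le> e" "\<bar>p\<bar> \<le> W" "\<bar>q\<bar> \<le> W"
  shows "\<bar>(A*p + B*q)*p + (C*p + D*q)*q\<bar> \<le> 4 * e * W\<^sup>2"
proof -
  have W: "W \<ge> 0" using assms(5) by linarith
  have t: "\<bar>X * y * z\<bar> \<le> e * W * W" if "\<bar>X\<bar> \<le> e" "\<bar>y\<bar> \<le> W" "\<bar>z\<bar> \<le> W" for X y z :: real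
  proof -
    have "\<bar>X * y * z\<bar> = \<bar>X\<bar> * \<bar>y\<bar> * \<bar>z\<bar>" by (simp add: abs_mult)
    also have "\<dots> \<le> e * W * W" using that W by (intro mult_mono) auto
    finally show ?thesis .
  qed
  have "(A*p + B*q)*p + (C*p + D*q)*q = A*p*p + B*q*p + C*p*q + D*q*q" by (simp add: algebra_simps)
  then have "\<bar>(A*p + B*q)*p + (C*p + D*q)*q\<bar> \<le> \<bar>A*p*p\<bar> + \<bar>B*q*p\<bar> + \<bar>C*p*q\<bar> + \<bar>D*q*q\<bar>" by simp
  also have "\<dots> \<le> e*W*W + e*W*W + e*W*W + e*W*W" using t assms by (intro add_mono) auto
  finally show ?thesis by (simp add: power2_eq_square algebra_simps)
qed


locale mt = kern +
  fixes L L2 L3 L22 L23 L32 L33 :: "real \<Rightarrow> real \<Rightarrow> real \<Rightarrow> real"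
    and x :: "real \<Rightarrow> real" and xa xb :: real
  assumes L_cont: "continuous_on ({a..b} \<times> UNIV \<times> UNIV) (\<lambda>(t, u, v). L t u v)"
    and L2: "\<And>t u v. t \<in> {a..b} \<Longrightarrow> ((\<lambda>u. L t u v) has_real_derivative L2 t u v) (at u)"
    and L3: "\<And>t u v. t \<in> {a..b} \<Longrightarrow> ((\<lambda>v. L t u v) has_real_derivative L3 t u v) (at v)"
    and L2_cont: "continuous_on ({a..b} \<times> UNIV \<times> UNIV) (\<lambda>(t, u, v). L2 t u v)"
    and L3_cont: "continuous_on ({a..b} \<times> UNIV \<times> UNIV) (\<lambda>(t, u, v). L3 t u v)"
    and min: "local_minimizer a b \<alpha> \<rho> L (U_set a b xa xb) x"
    and L22: "\<And>t u v. t \<in> {a..b} \<Longrightarrow> ((\<lambda>u. L2 t u v) has_real_derivative L22 t u v) (at u)"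
    and L23: "\<And>t u v. t \<in> {a..b} \<Longrightarrow> ((\<lambda>v. L2 t u v) has_real_derivative L23 t u v) (at v)"
    and L32: "\<And>t u v. t \<in> {a..b} \<Longrightarrow> ((\<lambda>u. L3 t u v) has_real_derivative L32 t u v) (at u)"
    and L33: "\<And>t u v. t \<in> {a..b} \<Longrightarrow> ((\<lambda>v. L3 t u v) has_real_derivative L33 t u v) (at v)"
    and L22_cont: "continuous_on ({a..b} \<times> UNIV \<times> UNIV) (\<lambda>(t, u, v). L22 t u v)"
    and L23_cont: "continuous_on ({a..b} \<times> UNIV \<times> UNIV) (\<lambda>(t, u, v). L23 t u v)"
    and L32_cont: "continuous_on ({a..b} \<times> UNIV \<times> UNIV) (\<lambda>(t, u, v). L32 t u v)"
    and L33_cont: "continuous_on ({a..b} \<times> UNIV \<times> UNIV) (\<lambda>(t, u, v). L33 t u v)"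
begin

definition Dx where "Dx t = caputo_left a b \<alpha> \<rho> x t"
definition PP where "PP t = L22 t (x t) (Dx t)"
definition RR where "RR t = L23 t (x t) (Dx t) + L32 t (x t) (Dx t)"
definition SS where "SS t = L33 t (x t) (Dx t)"

lemma x_C1: obtains x' where "continuous_on {a..b} x'"
    "\<And>\<tau>. \<tau> \<in> {a..b} \<Longrightarrow> (x has_real_derivative x' \<tau>) (at \<tau> within {a..b})"
  using min unfolding local_minimizer_def U_set_def C1_on_def by blast

lemma x_cont: "continuous_on {a..b} x"
proof -
  obtain x' where "\<And>\<tau>. \<tau> \<in> {a..b} \<Longrightarrow> (x has_real_derivative x' \<tau>) (at \<tau> within {a..b})"
    using x_C1 by blast
  then show ?thesis
    by (meson DERIV_continuous continuous_on_eq_continuous_within)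
qed

lemma Dx_cont: "continuous_on {a..b} Dx"
proof -
  obtain x' where "continuous_on {a..b} x'"
    "\<And>\<tau>. \<tau> \<in> {a..b} \<Longrightarrow> (x has_real_derivative x' \<tau>) (at \<tau> within {a..b})"
    using x_C1 by blast
  from caputo_props(1)[OF this] show ?thesis unfolding Dx_def by (simp add: o_def)
qed

lemma PRS_cont: "continuous_on {a..b} PP" "continuous_on {a..b} RR" "continuous_on {a..b} SS"
  unfolding PP_def RR_def SS_def
  by (intro comp3[OF L22_cont] comp3[OF L33_cont] continuous_intros comp3[OF L23_cont] comp3[OF L32_cont] x_cont Dx_cont)+

lemma deriv_cont:
  assumes "\<And>\<tau>. \<tau> \<in> {a..b} \<Longrightarrow> (h has_real_derivative h' \<tau>) (at \<tau> within {a..b})"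
  shows "continuous_on {a..b} h"
  using assms by (meson DERIV_continuous continuous_on_eq_continuous_within)

lemma J_ge:
  assumes h'c: "continuous_on {a..b} h'"
    and h': "\<And>\<tau>. \<tau> \<in> {a..b} \<Longrightarrow> (h has_real_derivative h' \<tau>) (at \<tau> within {a..b})"
    and ha: "h a = 0" and hb: "h b = 0"
  obtains s0 where "s0 > 0" "\<And>\<sigma>. \<bar>\<sigma>\<bar> < s0 \<Longrightarrow>
      integral {a..b} (\<lambda>t. L t (x t) (Dx t)) \<le> integral {a..b} (\<lambda>t. L t (x t + \<sigma> * h t) (Dx t + \<sigma> * caputo_left a b \<alpha> \<rho> h t))"
proof -
  obtain x' where x'c: "continuous_on {a..b} x'"
    and x': "\<And>\<tau>. \<tau> \<in> {a..b} \<Longrightarrow> (x has_real_derivative x' \<tau>) (at \<tau> within {a..b})"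
    using x_C1 by blast
  have xU: "x \<in> U_set a b xa xb" using min by (simp add: local_minimizer_def)
  obtain \<epsilon>0 where e0: "\<epsilon>0 > 0" and e0m: "\<And>y. y \<in> U_set a b xa xb \<Longrightarrow> frac_norm a b \<alpha> \<rho> (\<lambda>t. y t - x t) < \<epsilon>0
      \<Longrightarrow> J_fun a b \<alpha> \<rho> L x \<le> J_fun a b \<alpha> \<rho> L y"
    using min unfolding local_minimizer_def by blast
  obtain Bh where Bh0: "Bh \<ge> 0" and Bh: "\<And>\<tau>. \<tau> \<in> {a..b} \<Longrightarrow> \<bar>h \<tau>\<bar> \<le> Bh"
    using cont_bound[OF deriv_cont[OF h']] by blast
  obtain Bh' where Bh'0: "Bh' \<ge> 0" and Bh': "\<And>\<tau>. \<tau> \<in> {a..b} \<Longrightarrow> \<bar>h' \<tau>\<bar> \<le> Bh'"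
    using cont_bound[OF h'c] by blast
  define W where "W = Bh + Bh' * Cb + 1"
  have W: "W > 0" using Bh0 Bh'0 Cb_nonneg by (simp add: W_def add_nonneg_pos)
  show ?thesis
  proof (rule that[of "\<epsilon>0 / W"])
    show "\<epsilon>0 / W > 0" using e0 W by simp
    fix \<sigma> assume \<sigma>: "\<bar>\<sigma>\<bar> < \<epsilon>0 / W"
    define y where "y t = x t + \<sigma> * h t" for t
    have y': "(y has_real_derivative x' \<tau> + \<sigma> * h' \<tau>) (at \<tau> within {a..b})" if "\<tau> \<in> {a..b}" for \<tau>
      unfolding y_def using x'[OF that] h'[OF that] by (auto intro!: derivative_eq_intros)
    have yU: "y \<in> U_set a b xa xb"
      unfolding U_set_def C1_on_def
    proof (intro CollectI conjI exI[of _ "\<lambda>\<tau>. x' \<tau> + \<sigma> * h' \<tau>"] ballI)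
      show "continuous_on {a..b} (\<lambda>\<tau>. x' \<tau> + \<sigma> * h' \<tau>)" by (intro continuous_intros x'c h'c)
      show "(y has_real_derivative x' t + \<sigma> * h' t) (at t within {a..b})" if "t \<in> {a..b}" for t
        using y'[OF that] .
      show "y a = xa" "y b = xb" using xU ha hb by (auto simp: y_def U_set_def)
    qed
    have yx: "(\<lambda>t. y t - x t) = (\<lambda>t. \<sigma> * h t)" by (auto simp: y_def)
    have s1: "(SUP t\<in>{a..b}. \<bar>\<sigma> * h t\<bar>) \<le> \<bar>\<sigma>\<bar> * Bh"
    proof (rule cSUP_least)
      show "{a..b} \<noteq> {}" using pos by simp
      show "\<bar>\<sigma> * h t\<bar> \<le> \<bar>\<sigma>\<bar> * Bh" if "t \<in> {a..b}" for t
        using Bh[OF that] by (simp add: abs_mult mult_left_mono)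
    qed
    have s2: "(SUP t\<in>{a..b}. \<bar>caputo_left a b \<alpha> \<rho> (\<lambda>t. \<sigma> * h t) t\<bar>) \<le> \<bar>\<sigma>\<bar> * (Bh' * Cb)"
    proof (rule cSUP_least)
      show "{a..b} \<noteq> {}" using pos by simp
      show "\<bar>caputo_left a b \<alpha> \<rho> (\<lambda>t. \<sigma> * h t) t\<bar> \<le> \<bar>\<sigma>\<bar> * (Bh' * Cb)" if "t \<in> {a..b}" for t
        using caputo_scale[OF h' that, of \<sigma>] caputo_props(2)[OF h'c h' that Bh']
        by (simp add: abs_mult mult_left_mono)
    qed
    have "frac_norm a b \<alpha> \<rho> (\<lambda>t. y t - x t) \<le> \<bar>\<sigma>\<bar> * Bh + \<bar>\<sigma>\<bar> * (Bh' * Cb)"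
      unfolding yx frac_norm_def using s1 s2 by linarith
    also have "\<dots> < \<bar>\<sigma>\<bar> * W + \<epsilon>0 * 0 + (\<epsilon>0 / W) * W - \<bar>\<sigma>\<bar> * W + 0"
    proof -
      have "\<bar>\<sigma>\<bar> * Bh + \<bar>\<sigma>\<bar> * (Bh' * Cb) \<le> \<bar>\<sigma>\<bar> * (W - 1)" by (simp add: W_def algebra_simps)
      also have "\<dots> \<le> \<bar>\<sigma>\<bar> * W" by (intro mult_left_mono) auto
      also have "\<bar>\<sigma>\<bar> * W < (\<epsilon>0 / W) * W" using \<sigma> W by (intro mult_strict_right_mono) auto
      finally show ?thesis by simp
    qed
    also have "\<dots> = \<epsilon>0" using W by simp
    finally have "J_fun a b \<alpha> \<rho> L x \<le> J_fun a b \<alpha> \<rho> L y" by (rule e0m[OF yU])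
    moreover have "J_fun a b \<alpha> \<rho> L y = integral {a..b} (\<lambda>t. L t (x t + \<sigma> * h t) (Dx t + \<sigma> * caputo_left a b \<alpha> \<rho> h t))"
      unfolding J_fun_def
    proof (rule integral_cong)
      fix t assume t: "t \<in> {a..b}"
      have "caputo_left a b \<alpha> \<rho> y t = Dx t + \<sigma> * caputo_left a b \<alpha> \<rho> h t"
        unfolding y_def Dx_def by (rule caputo_lin[OF x'c x' h'c h' t])
      then show "L t (y t) (caputo_left a b \<alpha> \<rho> y t) = L t (x t + \<sigma> * h t) (Dx t + \<sigma> * caputo_left a b \<alpha> \<rho> h t)"
        by (simp add: y_def)
    qed
    ultimately show "integral {a..b} (\<lambda>t. L t (x t) (Dx t)) \<le> integral {a..b} (\<lambda>t. L t (x t + \<sigma> * h t) (Dx t + \<sigma> * caputo_left a b \<alpha> \<rho> h t))"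
      by (simp add: J_fun_def Dx_def)
  qed
qed

lemma second_var:
  assumes h'c: "continuous_on {a..b} h'"
    and h': "\<And>\<tau>. \<tau> \<in> {a..b} \<Longrightarrow> (h has_real_derivative h' \<tau>) (at \<tau> within {a..b})"
    and ha: "h a = 0" and hb: "h b = 0"
  shows "integral {a..b} (\<lambda>t. PP t * (h t)\<^sup>2 + RR t * h t * caputo_left a b \<alpha> \<rho> h t
             + SS t * (caputo_left a b \<alpha> \<rho> h t)\<^sup>2) \<ge> 0"
proof -
  define Dh where "Dh t = caputo_left a b \<alpha> \<rho> h t" for t
  define Q where "Q t = PP t * (h t)\<^sup>2 + RR t * h t * Dh t + SS t * (Dh t)\<^sup>2" for t
  obtain s0 where s0: "s0 > 0" and s0m: "\<And>\<sigma>. \<bar>\<sigma>\<bar> < s0 \<Longrightarrow>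
      integral {a..b} (\<lambda>t. L t (x t) (Dx t)) \<le> integral {a..b} (\<lambda>t. L t (x t + \<sigma> * h t) (Dx t + \<sigma> * Dh t))"
    using J_ge[OF h'c h' ha hb] unfolding Dh_def by blast
  have hc: "continuous_on {a..b} h" by (rule deriv_cont[OF h'])
  have Dhc: "continuous_on {a..b} Dh" unfolding Dh_def using caputo_props(1)[OF h'c h'] by (simp add: o_def)
  obtain Bh where Bh0: "Bh \<ge> 0" and Bh: "\<And>\<tau>. \<tau> \<in> {a..b} \<Longrightarrow> \<bar>h \<tau>\<bar> \<le> Bh"
    using cont_bound[OF hc] by blast
  obtain Bh' where Bh'0: "Bh' \<ge> 0" and Bh': "\<And>\<tau>. \<tau> \<in> {a..b} \<Longrightarrow> \<bar>h' \<tau>\<bar> \<le> Bh'"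
    using cont_bound[OF h'c] by blast
  obtain Bx where Bx: "\<And>\<tau>. \<tau> \<in> {a..b} \<Longrightarrow> \<bar>x \<tau>\<bar> \<le> Bx"
    using cont_bound[OF x_cont] by blast
  obtain BDx where BDx: "\<And>\<tau>. \<tau> \<in> {a..b} \<Longrightarrow> \<bar>Dx \<tau>\<bar> \<le> BDx"
    using cont_bound[OF Dx_cont] by blast
  define W where "W = Bh + Bh' * Cb + 1"
  have W: "W > 0" using Bh0 Bh'0 Cb_nonneg by (simp add: W_def add_nonneg_pos)
  have hW: "\<bar>h t\<bar> \<le> W" if "t \<in> {a..b}" for t
  proof -
    have "Bh' * Cb \<ge> 0" using Bh'0 Cb_nonneg by simp
    then show ?thesis using Bh[OF that] unfolding W_def by linarith
  qed
  have DhW: "\<bar>Dh t\<bar> \<le> W" if "t \<in> {a..b}" for t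
    using caputo_props(2)[OF h'c h' that Bh'] Bh0 unfolding Dh_def W_def by linarith
  define R where "R = Bx + BDx + 2 * W"
  have Qc: "continuous_on {a..b} Q" unfolding Q_def
    by (intro continuous_intros PRS_cont hc Dhc)
  have Lc: "continuous_on {a..b} (\<lambda>t. L t (x t + \<sigma> * h t) (Dx t + \<sigma> * Dh t))" for \<sigma>
    by (intro comp3[OF L_cont] continuous_intros x_cont Dx_cont hc Dhc)
  have key: "- (ee * (b - a)) \<le> integral {a..b} Q" if ee: "ee > 0" for ee
  proof -
    define e1 where "e1 = ee / (4 * W\<^sup>2)"
    have e1: "e1 > 0" using ee W by (simp add: e1_def)
    obtain d22 where d22: "d22 > 0" "\<forall>t\<in>{a..b}. \<forall>u v u' v'. \<bar>u\<bar> \<le> R \<and> \<bar>v\<bar> \<le> R \<and> \<bar>u'\<bar> \<le> R \<and> \<bar>v'\<bar> \<le> R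
      \<and> \<bar>u' - u\<bar> < d22 \<and> \<bar>v' - v\<bar> < d22 \<longrightarrow> \<bar>L22 t u' v' - L22 t u v\<bar> < e1"
      using unif_est[OF L22_cont e1, where R=R] by blast
    obtain d23 where d23: "d23 > 0" "\<forall>t\<in>{a..b}. \<forall>u v u' v'. \<bar>u\<bar> \<le> R \<and> \<bar>v\<bar> \<le> R \<and> \<bar>u'\<bar> \<le> R \<and> \<bar>v'\<bar> \<le> R
      \<and> \<bar>u' - u\<bar> < d23 \<and> \<bar>v' - v\<bar> < d23 \<longrightarrow> \<bar>L23 t u' v' - L23 t u v\<bar> < e1"
      using unif_est[OF L23_cont e1, where R=R] by blast
    obtain d32 where d32: "d32 > 0" "\<forall>t\<in>{a..b}. \<forall>u v u' v'. \<bar>u\<bar> \<le> R \<and> \<bar>v\<bar> \<le> R \<and> \<bar>u'\<bar> \<le> R \<and> \<bar>v'\<bar> \<le> R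
      \<and> \<bar>u' - u\<bar> < d32 \<and> \<bar>v' - v\<bar> < d32 \<longrightarrow> \<bar>L32 t u' v' - L32 t u v\<bar> < e1"
      using unif_est[OF L32_cont e1, where R=R] by blast
    obtain d33 where d33: "d33 > 0" "\<forall>t\<in>{a..b}. \<forall>u v u' v'. \<bar>u\<bar> \<le> R \<and> \<bar>v\<bar> \<le> R \<and> \<bar>u'\<bar> \<le> R \<and> \<bar>v'\<bar> \<le> R
      \<and> \<bar>u' - u\<bar> < d33 \<and> \<bar>v' - v\<bar> < d33 \<longrightarrow> \<bar>L33 t u' v' - L33 t u v\<bar> < e1"
      using unif_est[OF L33_cont e1, where R=R] by blast
    define d where "d = min (min d22 d23) (min d32 d33)"
    have d: "d > 0" "d \<le> d22" "d \<le> d23" "d \<le> d32" "d \<le> d33" using d22 d23 d32 d33 by (auto simp: d_def)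
    define s where "s = min (1/2) (min (s0/2) (d / (2 * W)))"
    have s: "s > 0" "s < s0" "s \<le> 1" "s * W < d"
    proof -
      show "s > 0" using s0 d W by (simp add: s_def)
      show "s < s0" using s0 by (simp add: s_def)
      show "s \<le> 1" by (simp add: s_def)
      have "s \<le> d / (2 * W)" by (simp add: s_def)
      then have "s * W \<le> d / (2 * W) * W" using W by (intro mult_right_mono) auto
      also have "\<dots> = d / 2" using W by simp
      finally show "s * W < d" using d by simp
    qed
    define \<Delta> where "\<Delta> t = L t (x t + s * h t) (Dx t + s * Dh t) + L t (x t + (-s) * h t) (Dx t + (-s) * Dh t)
        - 2 * L t (x t) (Dx t)" for t
    have pw: "\<Delta> t \<le> s\<^sup>2 * (Q t + ee)" if t: "t \<in> {a..b}" for t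
    proof -
      define p where "p = h t"
      define q where "q = Dh t"
      define H where "H r = (L22 t (x t + r*p) (Dx t + r*q) * p + L23 t (x t + r*p) (Dx t + r*q) * q) * p
          + (L32 t (x t + r*p) (Dx t + r*q) * p + L33 t (x t + r*p) (Dx t + r*q) * q) * q" for r
      have Hb: "H r \<le> Q t + ee" if r: "r \<in> {-s..s}" for r
      proof -
        have pW: "\<bar>p\<bar> \<le> W" "\<bar>q\<bar> \<le> W" using hW[OF t] DhW[OF t] by (auto simp: p_def q_def)
        have rs: "\<bar>r\<bar> \<le> s" using r by auto
        have rp: "\<bar>r * p\<bar> < d" "\<bar>r * q\<bar> < d"
        proof -
          have "\<bar>r * p\<bar> \<le> s * W" unfolding abs_mult using rs pW s by (intro mult_mono) auto
          then show "\<bar>r * p\<bar> < d" using s by linarith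
          have "\<bar>r * q\<bar> \<le> s * W" unfolding abs_mult using rs pW s by (intro mult_mono) auto
          then show "\<bar>r * q\<bar> < d" using s by linarith
        qed
        have rW: "\<bar>r * p\<bar> \<le> W" "\<bar>r * q\<bar> \<le> W"
        proof -
          have "\<bar>r * p\<bar> \<le> 1 * W" unfolding abs_mult using rs pW s by (intro mult_mono) auto
          then show "\<bar>r * p\<bar> \<le> W" by simp
          have "\<bar>r * q\<bar> \<le> 1 * W" unfolding abs_mult using rs pW s by (intro mult_mono) auto
          then show "\<bar>r * q\<bar> \<le> W" by simp
        qed
        have bnds: "\<bar>x t\<bar> \<le> R" "\<bar>Dx t\<bar> \<le> R" "\<bar>x t + r*p\<bar> \<le> R" "\<bar>Dx t + r*q\<bar> \<le> R"
          using Bx[OF t] BDx[OF t] rW W unfolding R_def by (auto simp: abs_le_iff)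
        have cl: "\<bar>(x t + r*p) - x t\<bar> < dd" "\<bar>(Dx t + r*q) - Dx t\<bar> < dd" if "d \<le> dd" for dd
          using rp that by auto
        have A: "\<bar>L22 t (x t + r*p) (Dx t + r*q) - L22 t (x t) (Dx t)\<bar> \<le> e1"
          using d22(2)[rule_format, OF t, of "x t" "Dx t" "x t + r*p" "Dx t + r*q"] bnds cl[OF d(2)] by auto
        have B: "\<bar>L23 t (x t + r*p) (Dx t + r*q) - L23 t (x t) (Dx t)\<bar> \<le> e1"
          using d23(2)[rule_format, OF t, of "x t" "Dx t" "x t + r*p" "Dx t + r*q"] bnds cl[OF d(3)] by auto
        have C: "\<bar>L32 t (x t + r*p) (Dx t + r*q) - L32 t (x t) (Dx t)\<bar> \<le> e1"
          using d32(2)[rule_format, OF t, of "x t" "Dx t" "x t + r*p" "Dx t + r*q"] bnds cl[OF d(4)] by auto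
        have D: "\<bar>L33 t (x t + r*p) (Dx t + r*q) - L33 t (x t) (Dx t)\<bar> \<le> e1"
          using d33(2)[rule_format, OF t, of "x t" "Dx t" "x t + r*p" "Dx t + r*q"] bnds cl[OF d(5)] by auto
        have "H r - Q t =
          ((L22 t (x t + r*p) (Dx t + r*q) - L22 t (x t) (Dx t)) * p + (L23 t (x t + r*p) (Dx t + r*q) - L23 t (x t) (Dx t)) * q) * p
          + ((L32 t (x t + r*p) (Dx t + r*q) - L32 t (x t) (Dx t)) * p + (L33 t (x t + r*p) (Dx t + r*q) - L33 t (x t) (Dx t)) * q) * q"
          unfolding H_def Q_def PP_def RR_def SS_def p_def q_def by (simp add: algebra_simps power2_eq_square)
        also have "\<dots> \<le> 4 * e1 * W\<^sup>2"
          using quad_bound[OF A B C D pW] by linarith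
        also have "\<dots> = ee" using W by (simp add: e1_def)
        finally show ?thesis by simp
      qed
      obtain r1 r2 where r12: "r1 \<in> {-s..s}" "r2 \<in> {-s..s}"
        "L t (x t + s*p) (Dx t + s*q) + L t (x t + (-s)*p) (Dx t + (-s)*q) - 2 * L t (x t) (Dx t) = s\<^sup>2 / 2 * (H r1 + H r2)"
        unfolding H_def
        using taylor_sym[of "L t" "L2 t" "L3 t" "L22 t" "L23 t" "L32 t" "L33 t" s "x t" p "Dx t" q]
          L2[OF t] L3[OF t] L22[OF t] L23[OF t] L32[OF t] L33[OF t]
          cont_fix_t[OF L2_cont t] cont_fix_t[OF L22_cont t] cont_fix_t[OF L32_cont t] s(1)
        by blast
      have "\<Delta> t = s\<^sup>2 / 2 * (H r1 + H r2)" using r12(3) by (simp add: \<Delta>_def p_def q_def)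
      also have "\<dots> \<le> s\<^sup>2 / 2 * ((Q t + ee) + (Q t + ee))"
        using Hb[OF r12(1)] Hb[OF r12(2)] by (intro mult_left_mono add_mono) auto
      also have "\<dots> = s\<^sup>2 * (Q t + ee)" by (simp add: field_simps)
      finally show ?thesis .
    qed
    define I where "I \<sigma> = integral {a..b} (\<lambda>t. L t (x t + \<sigma> * h t) (Dx t + \<sigma> * Dh t))" for \<sigma>
    have hi: "((\<lambda>t. L t (x t + \<sigma> * h t) (Dx t + \<sigma> * Dh t)) has_integral I \<sigma>) {a..b}" for \<sigma>
      unfolding I_def using integrable_continuous_interval[OF Lc] by (simp add: has_integral_integral)
    have I0: "I 0 = integral {a..b} (\<lambda>t. L t (x t) (Dx t))" by (simp add: I_def)
    have le1: "I 0 \<le> I s" "I 0 \<le> I (-s)" using s0m[of s] s0m[of "-s"] s I0 by (auto simp: I_def)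
    have hD: "(\<Delta> has_integral (I s + I (-s) - 2 * I 0)) {a..b}"
    proof -
      have "((\<lambda>t. L t (x t + s * h t) (Dx t + s * Dh t) + L t (x t + (-s) * h t) (Dx t + (-s) * Dh t)
         - 2 * L t (x t + 0 * h t) (Dx t + 0 * Dh t)) has_integral (I s + I (-s) - 2 * I 0)) {a..b}"
        by (intro has_integral_diff has_integral_add has_integral_mult_right hi)
      then show ?thesis unfolding \<Delta>_def by simp
    qed
    have hQ: "((\<lambda>t. s\<^sup>2 * (Q t + ee)) has_integral s\<^sup>2 * (integral {a..b} Q + ee * (b - a))) {a..b}"
    proof -
      have "(Q has_integral integral {a..b} Q) {a..b}"
        using integrable_continuous_interval[OF Qc] by (simp add: has_integral_integral)
      moreover have "((\<lambda>t. ee) has_integral ee * (b - a)) {a..b}"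
        using has_integral_const_real[of ee a b] pos by (simp add: mult.commute)
      ultimately show ?thesis by (intro has_integral_mult_right has_integral_add)
    qed
    have "I s + I (-s) - 2 * I 0 \<le> s\<^sup>2 * (integral {a..b} Q + ee * (b - a))"
      by (rule has_integral_le[OF hD hQ pw])
    then have "0 \<le> s\<^sup>2 * (integral {a..b} Q + ee * (b - a))" using le1 by linarith
    then have "0 \<le> integral {a..b} Q + ee * (b - a)"
      using s(1) by (simp add: zero_le_mult_iff)
    then show ?thesis by linarith
  qed
  have "integral {a..b} Q \<ge> 0"
  proof (rule ccontr)
    assume "\<not> integral {a..b} Q \<ge> 0"
    then have neg: "integral {a..b} Q < 0" by simp
    define ee where "ee = - integral {a..b} Q / (2 * (b - a))"
    have "2 * (b - a) > 0" using pos by simp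
    then have ee: "ee > 0" using neg unfolding ee_def by (intro divide_pos_pos) auto
    have "ee * (b - a) = - integral {a..b} Q / 2" using pos unfolding ee_def by (simp add: field_simps)
    then show False using key[OF ee] neg by linarith
  qed
  moreover have "Q = (\<lambda>t. PP t * (h t)\<^sup>2 + RR t * h t * caputo_left a b \<alpha> \<rho> h t
             + SS t * (caputo_left a b \<alpha> \<rho> h t)\<^sup>2)" by (rule ext) (simp add: Q_def Dh_def)
  ultimately show ?thesis by simp
qed

end

lemma sqmax_deriv: "((\<lambda>y::real. (max 0 y)\<^sup>2) has_real_derivative 2 * max 0 y) (at y)"
proof -
  consider "y > 0" | "y < 0" | "y = 0" by linarith
  then show ?thesis
  proof cases
    case 1
    have "((\<lambda>y::real. y\<^sup>2) has_real_derivative 2 * max 0 y) (at y)" using 1 by (auto intro!: derivative_eq_intros)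
    then show ?thesis
      by (rule has_field_derivative_transform_within_open[where S="{0<..}"]) (use 1 in auto)
  next
    case 2
    have "((\<lambda>y::real. 0) has_real_derivative 2 * max 0 y) (at y)" using 2 by simp
    then show ?thesis
      by (rule has_field_derivative_transform_within_open[where S="{..<0}"]) (use 2 in auto)
  next
    case 3
    have "((\<lambda>h. ((max 0 (0 + h))\<^sup>2 - (max 0 0)\<^sup>2) / h) \<longlongrightarrow> 0) (at (0::real))"
    proof (rule Lim_null_comparison)
      show "\<forall>\<^sub>F h in at 0. norm (((max 0 (0 + h))\<^sup>2 - (max 0 0)\<^sup>2) / h) \<le> \<bar>h\<bar>"
      proof (rule always_eventually, rule allI)
        fix h :: real
        show "norm (((max 0 (0 + h))\<^sup>2 - (max 0 0)\<^sup>2) / h) \<le> \<bar>h\<bar>"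
          by (cases "h > 0") (auto simp: power2_eq_square abs_mult max_def)
      qed
      show "((\<lambda>h::real. \<bar>h\<bar>) \<longlongrightarrow> 0) (at 0)"
        using tendsto_rabs[OF tendsto_ident_at[of "0::real" UNIV]] by simp
    qed
    then show ?thesis using 3 by (simp add: DERIV_def)
  qed
qed

definition bump :: "real \<Rightarrow> real \<Rightarrow> real \<Rightarrow> real" where
  "bump c e t = (max 0 ((t - c) * (c + e - t)))\<^sup>2"
definition bump' :: "real \<Rightarrow> real \<Rightarrow> real \<Rightarrow> real" where
  "bump' c e t = 2 * max 0 ((t - c) * (c + e - t)) * (2 * c + e - 2 * t)"

lemma bump_deriv: "(bump c e has_real_derivative bump' c e t) (at t)"
proof -
  have d: "((\<lambda>t. (t - c) * (c + e - t)) has_real_derivative (2 * c + e - 2 * t)) (at t)"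
    by (auto intro!: derivative_eq_intros simp: algebra_simps)
  show ?thesis unfolding bump_def bump'_def
    using DERIV_chain2[OF sqmax_deriv d] by simp
qed

lemma bump'_cont: "continuous_on S (bump' c e)"
  unfolding bump'_def by (intro continuous_intros)

lemma bump_out: assumes "t \<le> c \<or> c + e \<le> t" and "e > 0"
  shows "bump c e t = 0" "bump' c e t = 0"
proof -
  have "(t - c) * (c + e - t) \<le> 0" using assms by (auto simp: mult_le_0_iff)
  then show "bump c e t = 0" "bump' c e t = 0" by (auto simp: bump_def bump'_def max_def)
qed

lemma prod_le: fixes t c e :: real shows "(t - c) * (c + e - t) \<le> e\<^sup>2 / 4"
proof -
  have "0 \<le> (2 * t - 2 * c - e)\<^sup>2" by simp
  then show ?thesis by (simp add: power2_eq_square algebra_simps)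
qed

lemma bump_bounds:
  assumes "e > 0"
  shows "0 \<le> bump c e t" "bump c e t \<le> e^4 / 16" "\<bar>bump' c e t\<bar> \<le> e^3 / 2"
proof -
  show "0 \<le> bump c e t" by (simp add: bump_def)
  have g: "max 0 ((t - c) * (c + e - t)) \<le> e\<^sup>2 / 4" "0 \<le> max 0 ((t - c) * (c + e - t))"
  proof -
    have "0 \<le> e\<^sup>2 / 4" by simp
    then show "max 0 ((t - c) * (c + e - t)) \<le> e\<^sup>2 / 4" "0 \<le> max 0 ((t - c) * (c + e - t))"
      using prod_le[of t c e] by (auto simp: max_def)
  qed
  have "bump c e t \<le> (e\<^sup>2 / 4)\<^sup>2" unfolding bump_def using g by (intro power_mono) auto
  then show "bump c e t \<le> e^4 / 16" by (simp add: power_divide power_mult[symmetric])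
  show "\<bar>bump' c e t\<bar> \<le> e^3 / 2"
  proof (cases "t \<le> c \<or> c + e \<le> t")
    case True then show ?thesis using bump_out[OF True assms] using assms by simp
  next
    case False
    then have "\<bar>2 * c + e - 2 * t\<bar> \<le> e" by auto
    then have "\<bar>bump' c e t\<bar> \<le> 2 * (e\<^sup>2 / 4) * e"
      unfolding bump'_def abs_mult using g by (intro mult_mono) auto
    then show ?thesis by (simp add: power2_eq_square power3_eq_cube)
  qed
qed

lemma bump'_nonneg: assumes "t \<le> c + e / 2" "e > 0" shows "bump' c e t \<ge> 0"
  using assms unfolding bump'_def by (intro mult_nonneg_nonneg) auto

lemma bump_low:
  assumes "c + e / 4 \<le> t" "t \<le> c + e / 2" "e > 0"
  shows "bump c e t \<ge> e^4 / 64"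
proof -
  have "(e / 4) * (e / 2) \<le> (t - c) * (c + e - t)" using assms by (intro mult_mono) auto
  then have "(e^2 / 8) \<le> max 0 ((t - c) * (c + e - t))" by (simp add: power2_eq_square)
  then have "(e^2 / 8)\<^sup>2 \<le> bump c e t" unfolding bump_def using assms by (intro power_mono) auto
  then show ?thesis by (simp add: power_divide power_mult[symmetric])
qed

lemma bump_ftc: assumes "u \<le> v" shows "(bump' c e has_integral (bump c e v - bump c e u)) {u..v}"
  using assms
  by (intro fundamental_theorem_of_calculus)
     (auto simp: has_real_derivative_iff_has_vector_derivative[symmetric] intro: has_field_derivative_at_within bump_deriv)

context kern
begin

lemma bump_d: "(bump c e has_real_derivative bump' c e \<tau>) (at \<tau> within {a..b})"
  by (rule has_field_derivative_at_within[OF bump_deriv])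

lemma Dbump_eq: "t \<in> {a..b} \<Longrightarrow> caputo_left a b \<alpha> \<rho> (bump c e) t = cc * integral {a..t} (\<lambda>\<tau>. K t \<tau> * bump' c e \<tau>)"
  by (rule caputo_eq[OF bump_d])

lemma Dbump_int: "t \<in> {a..b} \<Longrightarrow> (\<lambda>\<tau>. K t \<tau> * bump' c e \<tau>) integrable_on {a..t}"
  by (rule caputo_props(3)[OF bump'_cont bump_d])

lemma Dbump_zero:
  assumes "e > 0" "t \<in> {a..b}" "t \<le> c"
  shows "caputo_left a b \<alpha> \<rho> (bump c e) t = 0"
proof -
  have "integral {a..t} (\<lambda>\<tau>. K t \<tau> * bump' c e \<tau>) = integral {a..t} (\<lambda>\<tau>. 0)"
    using assms bump_out(2)[of _ c e] by (intro integral_cong) auto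
  then show ?thesis using Dbump_eq[OF assms(2)] by simp
qed

lemma Dbump_split:
  assumes "e > 0" "a \<le> c" "c \<le> t" "t \<le> b"
  shows "integral {a..t} (\<lambda>\<tau>. K t \<tau> * bump' c e \<tau>) = integral {c..t} (\<lambda>\<tau>. K t \<tau> * bump' c e \<tau>)"
proof -
  have "integral {a..c} (\<lambda>\<tau>. K t \<tau> * bump' c e \<tau>) = integral {a..c} (\<lambda>\<tau>. 0)"
    using assms bump_out(2)[of _ c e] by (intro integral_cong) auto
  moreover have "integral {a..c} (\<lambda>\<tau>. K t \<tau> * bump' c e \<tau>) + integral {c..t} (\<lambda>\<tau>. K t \<tau> * bump' c e \<tau>)
      = integral {a..t} (\<lambda>\<tau>. K t \<tau> * bump' c e \<tau>)"
  proof -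
    have "(\<lambda>\<tau>. K t \<tau> * bump' c e \<tau>) integrable_on {a..t}" using Dbump_int[of t c e] assms by auto
    then show ?thesis using assms Henstock_Kurzweil_Integration.integral_combine[where a=a and c=c and b=t and f="\<lambda>\<tau>. K t \<tau> * bump' c e \<tau>"] by auto
  qed
  ultimately show ?thesis by simp
qed

lemma Dbump_near:
  assumes "e > 0" "a \<le> c" "c \<le> t" "t \<le> c + e" "t \<le> b"
  shows "\<bar>caputo_left a b \<alpha> \<rho> (bump c e) t\<bar> \<le> cc * ((e^3 / 2) * mm powr (-\<alpha>) * (e powr (1 - \<alpha>) / (1 - \<alpha>)))"
proof -
  have "\<bar>integral {c..t} (\<lambda>\<tau>. K t \<tau> * bump' c e \<tau>)\<bar> \<le> (e^3 / 2) * mm powr (-\<alpha>) * ((t - c) powr (1 - \<alpha>) / (1 - \<alpha>))"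
    using assms bump_bounds(3)[OF assms(1)] by (intro Kf_integrable(2) bump'_cont) auto
  also have "\<dots> \<le> (e^3 / 2) * mm powr (-\<alpha>) * (e powr (1 - \<alpha>) / (1 - \<alpha>))"
    using assms pos mm_pos by (intro mult_left_mono divide_right_mono powr_mono2) auto
  finally have "cc * \<bar>integral {c..t} (\<lambda>\<tau>. K t \<tau> * bump' c e \<tau>)\<bar> \<le> cc * ((e^3 / 2) * mm powr (-\<alpha>) * (e powr (1 - \<alpha>) / (1 - \<alpha>)))"
    using cc_pos by (intro mult_left_mono) auto
  moreover have "\<bar>caputo_left a b \<alpha> \<rho> (bump c e) t\<bar> = cc * \<bar>integral {c..t} (\<lambda>\<tau>. K t \<tau> * bump' c e \<tau>)\<bar>"
    using Dbump_eq[of t c e] Dbump_split[OF assms(1,2,3,5)] assms cc_pos by (simp add: abs_mult)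
  ultimately show ?thesis by simp
qed

lemma Dbump_low:
  assumes "e > 0" "a \<le> c" "c + e / 4 \<le> t" "t \<le> c + e / 2" "t \<le> b"
  shows "caputo_left a b \<alpha> \<rho> (bump c e) t \<ge> cc * (MM powr (-\<alpha>) * (e / 2) powr (-\<alpha>) * (e^4 / 64))"
proof -
  have ct: "c < t" using assms by simp
  define f where "f \<tau> = (if \<tau> = t then 0 else K t c * bump' c e \<tau>)" for \<tau>
  have "(f has_integral K t c * (bump c e t - bump c e c)) {c..t}"
  proof -
    have "((\<lambda>\<tau>. K t c * bump' c e \<tau>) has_integral K t c * (bump c e t - bump c e c)) {c..t}"
      using bump_ftc[of c t c e] ct by (intro has_integral_mult_right) auto
    then show ?thesis
      by (intro has_integral_spike[of "{t}" _ f "\<lambda>\<tau>. K t c * bump' c e \<tau>"]) (auto simp: f_def)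
  qed
  then have fi: "(f has_integral K t c * bump c e t) {c..t}" using bump_out(1)[of c c e] assms by simp
  have kb: "(\<lambda>\<tau>. K t \<tau> * bump' c e \<tau>) integrable_on {c..t}"
    using Kf_integrable(1)[of c t "bump' c e" "e^3/2"] assms bump'_cont bump_bounds(3)[OF assms(1)] by auto
  have le: "f \<tau> \<le> K t \<tau> * bump' c e \<tau>" if "\<tau> \<in> {c..t}" for \<tau>
  proof (cases "\<tau> = t")
    case True then show ?thesis by (simp add: f_def)
  next
    case False
    then have "\<tau> < t" using that by auto
    then have "K t c \<le> K t \<tau>" using that assms by (intro K_mono) auto
    moreover have "bump' c e \<tau> \<ge> 0" using that assms by (intro bump'_nonneg) auto
    ultimately show ?thesis using False by (simp add: f_def mult_right_mono)
  qed
  have A1: "K t c * bump c e t \<le> integral {c..t} (\<lambda>\<tau>. K t \<tau> * bump' c e \<tau>)"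
    using has_integral_le[OF fi integrable_integral[OF kb] le] .
  have A2: "MM powr (-\<alpha>) * (e / 2) powr (-\<alpha>) \<le> K t c"
  proof -
    have "MM powr (-\<alpha>) * (e / 2) powr (-\<alpha>) \<le> MM powr (-\<alpha>) * (t - c) powr (-\<alpha>)"
      using assms pos by (intro mult_left_mono powr_mono2') auto
    also have "\<dots> \<le> K t c" using assms by (intro K_ge) auto
    finally show ?thesis .
  qed
  have A3: "e^4 / 64 \<le> bump c e t" using assms by (intro bump_low) auto
  have "MM powr (-\<alpha>) * (e / 2) powr (-\<alpha>) * (e^4 / 64) \<le> integral {c..t} (\<lambda>\<tau>. K t \<tau> * bump' c e \<tau>)"
  proof -
    have "MM powr (-\<alpha>) * (e / 2) powr (-\<alpha>) * (e^4 / 64) \<le> K t c * bump c e t"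
      using A2 A3 K_nonneg[of t c] by (intro mult_mono) auto
    then show ?thesis using A1 by linarith
  qed
  then have "cc * (MM powr (-\<alpha>) * (e / 2) powr (-\<alpha>) * (e^4 / 64)) \<le> cc * integral {c..t} (\<lambda>\<tau>. K t \<tau> * bump' c e \<tau>)"
    using cc_pos by (intro mult_left_mono) auto
  moreover have "caputo_left a b \<alpha> \<rho> (bump c e) t = cc * integral {c..t} (\<lambda>\<tau>. K t \<tau> * bump' c e \<tau>)"
    using Dbump_eq[of t c e] Dbump_split[of e c t] assms by simp
  ultimately show ?thesis by simp
qed

end


context kern
begin

lemma powr_mvt:
  assumes "0 < u" "u \<le> v"
  shows "u powr (-\<alpha>) - v powr (-\<alpha>) \<le> \<alpha> * u powr (-\<alpha> - 1) * (v - u)"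
proof (cases "u = v")
  case True then show ?thesis by simp
next
  case False
  then have uv: "u < v" using assms by simp
  have "\<exists>z. u < z \<and> z < v \<and> v powr (-\<alpha>) - u powr (-\<alpha>) = (v - u) * (-\<alpha> * z powr (-\<alpha> - 1))"
  proof (rule MVT2[OF uv])
    fix x assume "u \<le> x" "x \<le> v"
    then have "x > 0" using assms by auto
    then show "((\<lambda>z. z powr (-\<alpha>)) has_real_derivative (-\<alpha> * x powr (-\<alpha> - 1))) (at x)"
      using has_real_derivative_powr[of x "-\<alpha>"] by simp
  qed
  then obtain z where z: "u < z" "z < v" "v powr (-\<alpha>) - u powr (-\<alpha>) = (v - u) * (-\<alpha> * z powr (-\<alpha> - 1))"
    by blast
  have "z powr (-\<alpha> - 1) \<le> u powr (-\<alpha> - 1)" using z assms pos by (intro powr_mono2') auto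
  then have "(v - u) * (\<alpha> * z powr (-\<alpha> - 1)) \<le> (v - u) * (\<alpha> * u powr (-\<alpha> - 1))"
    using uv pos by (intro mult_left_mono) auto
  then show ?thesis using z(3) by (simp add: algebra_simps)
qed

definition Lip where "Lip dd = \<alpha> * (mm * dd) powr (-\<alpha> - 1) * MM"

lemma Lip_nonneg: "Lip dd \<ge> 0" using pos MM_pos by (simp add: Lip_def)

lemma K_lip:
  assumes "a \<le> c" "c \<le> \<tau>" "\<tau> + dd \<le> t" "t \<le> b" "dd > 0"
  shows "0 \<le> K t \<tau> - K t c" "K t \<tau> - K t c \<le> Lip dd * (\<tau> - c)"
proof -
  show "0 \<le> K t \<tau> - K t c" using K_mono[of c \<tau> t] assms by auto
  define u where "u = t powr \<rho> - \<tau> powr \<rho>"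
  define v where "v = t powr \<rho> - c powr \<rho>"
  have u1: "mm * dd \<le> u"
  proof -
    have "mm * dd \<le> mm * (t - \<tau>)" using mm_pos assms by (intro mult_left_mono) auto
    also have "\<dots> \<le> u" unfolding u_def using pow_diff[of \<tau> t] assms by auto
    finally show ?thesis .
  qed
  have u0: "u > 0" using u1 mm_pos assms by (smt (verit) mult_pos_pos)
  have uv: "u \<le> v" unfolding u_def v_def using assms pos by (auto intro!: powr_mono2)
  have vu: "v - u \<le> MM * (\<tau> - c)" unfolding u_def v_def using pow_diff[of c \<tau>] assms by auto
  have "K t \<tau> - K t c = u powr (-\<alpha>) - v powr (-\<alpha>)" by (simp add: K_def u_def v_def)
  also have "\<dots> \<le> \<alpha> * u powr (-\<alpha> - 1) * (v - u)" by (rule powr_mvt[OF u0 uv])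
  also have "\<dots> \<le> \<alpha> * (mm * dd) powr (-\<alpha> - 1) * (MM * (\<tau> - c))"
  proof -
    have A: "\<alpha> * u powr (- \<alpha> - 1) \<le> \<alpha> * (mm * dd) powr (- \<alpha> - 1)"
      using u1 mm_pos assms pos by (intro mult_left_mono powr_mono2') auto
    have A0: "0 \<le> \<alpha> * (mm * dd) powr (- \<alpha> - 1)" using pos by simp
    have B0: "0 \<le> v - u" using uv by simp
    show ?thesis using mult_mono[OF A vu A0 B0] .
  qed
  finally show "K t \<tau> - K t c \<le> Lip dd * (\<tau> - c)" by (simp add: Lip_def algebra_simps)
qed

lemma Dbump_far:
  assumes "e > 0" "a \<le> c" "c + e + dd \<le> t" "t \<le> b" "dd > 0"
  shows "\<bar>caputo_left a b \<alpha> \<rho> (bump c e) t\<bar> \<le> cc * (Lip dd * e * (e^3 / 2) * e)"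
proof -
  let ?f = "\<lambda>\<tau>. K t \<tau> * bump' c e \<tau>"
  have t: "t \<in> {a..b}" using assms by auto
  have int_at: "?f integrable_on {c..t}"
    using Kf_integrable(1)[of c t "bump' c e" "e^3/2"] assms bump'_cont bump_bounds(3)[OF assms(1)] by auto
  have "integral {c..c+e} ?f + integral {c+e..t} ?f = integral {c..t} ?f"
    using int_at assms Henstock_Kurzweil_Integration.integral_combine[where a=c and c="c+e" and b=t and f="?f"] by auto
  moreover have "integral {c+e..t} ?f = integral {c+e..t} (\<lambda>\<tau>. 0)"
    using assms bump_out(2)[of _ c e] by (intro integral_cong) auto
  ultimately have I1: "integral {a..t} ?f = integral {c..c+e} ?f"
    using Dbump_split[of e c t] assms by simp
  have Kc: "continuous_on {c..c+e} (\<lambda>\<tau>. K t \<tau>)"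
  proof -
    have "continuous_on {c..c+e} (\<lambda>\<tau>. (t powr \<rho> - \<tau> powr \<rho>) powr (-\<alpha>))"
    proof (intro continuous_intros ballI)
      fix \<tau> assume "\<tau> \<in> {c..c+e}"
      then have "\<tau> > 0" "\<tau> < t" using assms pos by auto
      then show "t powr \<rho> - \<tau> powr \<rho> \<noteq> 0" using pos powr_less_mono2[of \<rho> \<tau> t] by auto
    qed (use assms pos in auto)
    then show ?thesis by (simp add: K_def)
  qed
  define g where "g \<tau> = (K t \<tau> - K t c) * bump' c e \<tau>" for \<tau>
  have gc: "continuous_on {c..c+e} g" unfolding g_def by (intro continuous_intros Kc bump'_cont)
  have hc: "((\<lambda>\<tau>. K t c * bump' c e \<tau>) has_integral K t c * (bump c e (c+e) - bump c e c)) {c..c+e}"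
    using bump_ftc[of c "c+e" c e] assms by (intro has_integral_mult_right) auto
  then have hc0: "((\<lambda>\<tau>. K t c * bump' c e \<tau>) has_integral 0) {c..c+e}"
    using bump_out(1)[of c c e] bump_out(1)[of "c+e" c e] assms by simp
  have "(g has_integral integral {c..c+e} g) {c..c+e}"
    using integrable_continuous_interval[OF gc] by (simp add: has_integral_integral)
  from has_integral_add[OF this hc0]
  have "(?f has_integral integral {c..c+e} g) {c..c+e}" by (simp add: g_def algebra_simps)
  then have I2: "integral {c..c+e} ?f = integral {c..c+e} g" by (simp add: integral_unique)
  have gb: "norm (g \<tau>) \<le> Lip dd * e * (e^3 / 2)" if "\<tau> \<in> {c..c+e}" for \<tau>
  proof -
    have "\<bar>K t \<tau> - K t c\<bar> \<le> Lip dd * e"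
    proof -
      have "K t \<tau> - K t c \<le> Lip dd * (\<tau> - c)" "0 \<le> K t \<tau> - K t c"
        using K_lip[of c \<tau> dd t] that assms by auto
      moreover have "Lip dd * (\<tau> - c) \<le> Lip dd * e" using that Lip_nonneg by (intro mult_left_mono) auto
      ultimately show ?thesis by simp
    qed
    then show ?thesis unfolding g_def norm_mult real_norm_def abs_mult
      using bump_bounds(3)[OF assms(1), of c \<tau>] Lip_nonneg assms by (intro mult_mono) auto
  qed
  have ci: "(\<lambda>\<tau>. Lip dd * e * (e^3 / 2)) integrable_on {c..c+e}"
    by (rule integrable_continuous_interval) (intro continuous_intros)
  have "\<bar>integral {c..c+e} g\<bar> \<le> integral {c..c+e} (\<lambda>\<tau>. Lip dd * e * (e^3 / 2))"
    using ci integral_norm_bound_integral[OF integrable_continuous_interval[OF gc], of "\<lambda>\<tau>. Lip dd * e * (e^3 / 2)"] gb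
    by auto
  also have "\<dots> = Lip dd * e * (e^3 / 2) * e" using assms by simp
  finally have "cc * \<bar>integral {c..c+e} g\<bar> \<le> cc * (Lip dd * e * (e^3 / 2) * e)"
    using cc_pos by (intro mult_left_mono) auto
  then show ?thesis using Dbump_eq[OF t, of c e] I1 I2 cc_pos by (simp add: abs_mult)
qed

end


lemma final_ineq:
  fixes \<alpha> M A B C D \<kappa> :: real
  assumes "0 < \<alpha>" "M \<ge> 0" "A \<ge> 0" "B > 0" "C \<ge> 0" "D \<ge> 0" "\<kappa> > 0"
  shows "\<exists>e0>0. \<forall>e. 0 < e \<and> e < e0 \<longrightarrow>
     M*(e^4/16)\<^sup>2*e + M*(e^4/16)*(A*(e^3*e powr (1-\<alpha>)))*e - \<kappa>*(B*((e/2) powr (-\<alpha>)*e^4))\<^sup>2*(e/4)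
       + M*(C*(e*e^3*e))\<^sup>2*D < 0"
proof -
  define k1 where "k1 = \<kappa> * B\<^sup>2 * (2 powr \<alpha>)\<^sup>2 / 4"
  have k1: "k1 > 0" using assms by (simp add: k1_def)
  define S where "S e = M * (e powr \<alpha>)\<^sup>2 / 256 + M * A * e powr \<alpha> / 16 + M * C\<^sup>2 * D * e * (e powr \<alpha>)\<^sup>2" for e :: real
  have "(S \<longlongrightarrow> S 0) (at_right 0)"
    unfolding S_def using assms
    by (intro tendsto_intros tendsto_powr') (auto simp: eventually_at_right_field intro: exI[of _ 1])
  moreover have "S 0 = 0" using assms by (simp add: S_def)
  ultimately have "\<forall>\<^sub>F e in at_right 0. S e < k1"
    using k1 by (auto dest: order_tendstoD(2))
  then obtain e0 where e0: "e0 > 0" "\<And>e. e > 0 \<Longrightarrow> e < e0 \<Longrightarrow> S e < k1"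
    unfolding eventually_at_right_field by auto
  show ?thesis
  proof (intro exI[of _ e0] conjI allI impI)
    show "e0 > 0" by fact
    fix e :: real assume e: "0 < e \<and> e < e0"
    then have ep: "e > 0" by simp
    define w where "w = e powr \<alpha>"
    have w: "w > 0" using ep by (simp add: w_def)
    have r1: "e powr (1 - \<alpha>) = e / w" using ep by (simp add: w_def powr_diff)
    have r2: "(e/2) powr (-\<alpha>) = 2 powr \<alpha> / w"
      using ep by (simp add: w_def powr_minus_divide powr_divide)
    have eq: "M*(e^4/16)\<^sup>2*e + M*(e^4/16)*(A*(e^3*e powr (1-\<alpha>)))*e - \<kappa>*(B*((e/2) powr (-\<alpha>)*e^4))\<^sup>2*(e/4)
       + M*(C*(e*e^3*e))\<^sup>2*D = e^9 / w\<^sup>2 * (S e - k1)"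
      unfolding r1 r2 S_def k1_def w_def[symmetric] using w ep
      by (simp add: field_simps power2_eq_square eval_nat_numeral)
    have "S e - k1 < 0" using e0(2)[of e] e by simp
    moreover have "e^9 / w\<^sup>2 > 0" using ep w by simp
    ultimately show "M*(e^4/16)\<^sup>2*e + M*(e^4/16)*(A*(e^3*e powr (1-\<alpha>)))*e - \<kappa>*(B*((e/2) powr (-\<alpha>)*e^4))\<^sup>2*(e/4)
       + M*(C*(e*e^3*e))\<^sup>2*D < 0"
      unfolding eq using mult_pos_neg[of "e^9 / w\<^sup>2" "S e - k1"] by simp
  qed
qed


lemma ind_int:
  fixes p q v :: real
  assumes "a' \<le> p" "p \<le> q" "q \<le> b'"
  shows "((\<lambda>t. if t \<in> {p..q} then v else 0) has_integral v * (q - p)) {a'..b'}"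
proof -
  have h: "((\<lambda>t. v) has_integral v * (q - p)) {p..q}"
    using has_integral_const_real[of v p q] assms by (simp add: mult.commute)
  have sub: "{p..q} \<subseteq> {a'..b'}" using assms by auto
  show ?thesis unfolding has_integral_restrict[OF sub] by (rule h)
qed

context mt
begin

lemma neg_interval:
  assumes t0: "t0 \<in> {a..b}" and neg: "SS t0 < 0"
  obtains c \<delta> \<kappa> where "a \<le> c" "\<delta> > 0" "c + \<delta> \<le> b" "\<kappa> > 0" "\<And>t. t \<in> {c..c+\<delta>} \<Longrightarrow> SS t \<le> -\<kappa>"
proof -
  define \<kappa> where "\<kappa> = - SS t0 / 2"
  have \<kappa>: "\<kappa> > 0" using neg by (simp add: \<kappa>_def)
  obtain d0 where d0: "d0 > 0" "\<And>t. t \<in> {a..b} \<Longrightarrow> dist t t0 < d0 \<Longrightarrow> dist (SS t) (SS t0) < \<kappa>"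
    using PRS_cont(3) t0 \<kappa> unfolding continuous_on_iff by metis
  define \<delta>1 where "\<delta>1 = min (d0/2) ((b-a)/2)"
  have \<delta>1: "\<delta>1 > 0" "\<delta>1 < d0" using d0 pos by (auto simp: \<delta>1_def)
  define c where "c = max a (t0 - \<delta>1)"
  have "t0 - \<delta>1 < b" using t0 \<delta>1 by auto
  then have c: "a \<le> c" "c \<le> t0" "c < b" using t0 pos \<delta>1 by (auto simp: c_def)
  define \<delta> where "\<delta> = min \<delta>1 (b - c)"
  have \<delta>: "\<delta> > 0" "c + \<delta> \<le> b" using \<delta>1 c by (auto simp: \<delta>_def)
  show ?thesis
  proof (rule that[OF c(1) \<delta>(1) \<delta>(2) \<kappa>])
    fix t assume t: "t \<in> {c..c+\<delta>}"
    then have tab: "t \<in> {a..b}" using c \<delta> by auto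
    have "t0 - \<delta>1 \<le> t" "t \<le> t0 + \<delta>1" using t c by (auto simp: c_def \<delta>_def)
    then have "dist t t0 < d0" using \<delta>1 by (auto simp: dist_real_def)
    then have "dist (SS t) (SS t0) < \<kappa>" using d0(2)[OF tab] by simp
    then show "SS t \<le> -\<kappa>" by (simp add: dist_real_def \<kappa>_def abs_less_iff)
  qed
qed

lemma legendre: "\<forall>t\<in>{a..b}. SS t \<ge> 0"
proof (rule ccontr)
  assume "\<not> (\<forall>t\<in>{a..b}. SS t \<ge> 0)"
  then obtain t0 where t0: "t0 \<in> {a..b}" "SS t0 < 0" by auto
  obtain c \<delta> \<kappa> where c: "a \<le> c" and \<delta>: "\<delta> > 0" "c + \<delta> \<le> b" and \<kappa>: "\<kappa> > 0"
    and SSneg: "\<And>t. t \<in> {c..c+\<delta>} \<Longrightarrow> SS t \<le> -\<kappa>"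
    using neg_interval[OF t0] by blast
  obtain M1 where "\<And>t. t \<in> {a..b} \<Longrightarrow> \<bar>PP t\<bar> \<le> M1" using cont_bound[OF PRS_cont(1)] by blast
  moreover obtain M2 where "\<And>t. t \<in> {a..b} \<Longrightarrow> \<bar>RR t\<bar> \<le> M2" using cont_bound[OF PRS_cont(2)] by blast
  moreover obtain M3 where "\<And>t. t \<in> {a..b} \<Longrightarrow> \<bar>SS t\<bar> \<le> M3" using cont_bound[OF PRS_cont(3)] by blast
  ultimately obtain M where M0: "M \<ge> 0" and MP: "\<And>t. t \<in> {a..b} \<Longrightarrow> \<bar>PP t\<bar> \<le> M"
    and MR: "\<And>t. t \<in> {a..b} \<Longrightarrow> \<bar>RR t\<bar> \<le> M" and MS: "\<And>t. t \<in> {a..b} \<Longrightarrow> \<bar>SS t\<bar> \<le> M"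
  proof -
    assume h1: "\<And>t. t \<in> {a..b} \<Longrightarrow> \<bar>PP t\<bar> \<le> M1" and h2: "\<And>t. t \<in> {a..b} \<Longrightarrow> \<bar>RR t\<bar> \<le> M2"
      and h3: "\<And>t. t \<in> {a..b} \<Longrightarrow> \<bar>SS t\<bar> \<le> M3"
      and th: "\<And>M. 0 \<le> M \<Longrightarrow> (\<And>t. t \<in> {a..b} \<Longrightarrow> \<bar>PP t\<bar> \<le> M) \<Longrightarrow> (\<And>t. t \<in> {a..b} \<Longrightarrow> \<bar>RR t\<bar> \<le> M)
           \<Longrightarrow> (\<And>t. t \<in> {a..b} \<Longrightarrow> \<bar>SS t\<bar> \<le> M) \<Longrightarrow> thesis"
    have "\<bar>PP a\<bar> \<le> M1" using h1 pos by auto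
    show thesis
    proof (rule th[of "max M1 (max M2 M3)"])
      show "0 \<le> max M1 (max M2 M3)" using h1[of a] pos by (auto simp: le_max_iff_disj)
      show "\<bar>PP t\<bar> \<le> max M1 (max M2 M3)" if "t \<in> {a..b}" for t using h1[OF that] by (auto simp: le_max_iff_disj)
      show "\<bar>RR t\<bar> \<le> max M1 (max M2 M3)" if "t \<in> {a..b}" for t using h2[OF that] by (auto simp: le_max_iff_disj)
      show "\<bar>SS t\<bar> \<le> max M1 (max M2 M3)" if "t \<in> {a..b}" for t using h3[OF that] by (auto simp: le_max_iff_disj)
    qed
  qed
  define dd where "dd = \<delta> / 2"
  have dd: "dd > 0" using \<delta> by (simp add: dd_def)
  define A where "A = cc * mm powr (-\<alpha>) / (2 * (1 - \<alpha>))"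
  define B where "B = cc * MM powr (-\<alpha>) / 64"
  define C where "C = cc * Lip dd / 2"
  have A: "A \<ge> 0" using cc_pos pos by (simp add: A_def)
  have B: "B > 0" using cc_pos MM_pos by (simp add: B_def)
  have C: "C \<ge> 0" using cc_pos Lip_nonneg by (simp add: C_def)
  obtain e0 where e0: "e0 > 0" and fin: "\<And>e. 0 < e \<Longrightarrow> e < e0 \<Longrightarrow>
     M*(e^4/16)\<^sup>2*e + M*(e^4/16)*(A*(e^3*e powr (1-\<alpha>)))*e - \<kappa>*(B*((e/2) powr (-\<alpha>)*e^4))\<^sup>2*(e/4)
       + M*(C*(e*e^3*e))\<^sup>2*(b - a) < 0"
    using final_ineq[of \<alpha> M A B C "b - a" \<kappa>] pos M0 A B C \<kappa> by auto
  define e where "e = min (e0 / 2) (\<delta> / 2)"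
  have e: "e > 0" "e < e0" "e \<le> \<delta> / 2" using e0 \<delta> by (auto simp: e_def)
  define Dh where "Dh t = caputo_left a b \<alpha> \<rho> (bump c e) t" for t
  define N where "N = A*(e^3*e powr (1-\<alpha>))"
  define low where "low = B*((e/2) powr (-\<alpha>)*e^4)"
  define far where "far = C*(e*e^3*e)"
  define V1 where "V1 = M*(e^4/16)\<^sup>2 + M*(e^4/16)*N"
  have N0: "N \<ge> 0" using A e by (simp add: N_def)
  have low0: "low \<ge> 0" using B e by (simp add: low_def)
  have V10: "V1 \<ge> 0" using M0 N0 by (simp add: V1_def)
  have nearb: "\<bar>Dh t\<bar> \<le> N" if "c \<le> t" "t \<le> c + e" for t
  proof -
    have "\<bar>Dh t\<bar> \<le> cc * ((e^3 / 2) * mm powr (-\<alpha>) * (e powr (1 - \<alpha>) / (1 - \<alpha>)))"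
      unfolding Dh_def using that e c \<delta> by (intro Dbump_near) auto
    also have "\<dots> = N" unfolding N_def A_def using pos by (simp add: field_simps)
    finally show ?thesis .
  qed
  have lowb: "Dh t \<ge> low" if "c + e/4 \<le> t" "t \<le> c + e/2" for t
  proof -
    have "Dh t \<ge> cc * (MM powr (-\<alpha>) * (e / 2) powr (-\<alpha>) * (e^4 / 64))"
      unfolding Dh_def using that e c \<delta> by (intro Dbump_low) auto
    moreover have "cc * (MM powr (-\<alpha>) * (e / 2) powr (-\<alpha>) * (e^4 / 64)) = low"
      unfolding low_def B_def by (simp add: field_simps)
    ultimately show ?thesis by simp
  qed
  have farb: "\<bar>Dh t\<bar> \<le> far" if "c + \<delta> \<le> t" "t \<le> b" for t
  proof -
    have "\<bar>Dh t\<bar> \<le> cc * (Lip dd * e * (e^3 / 2) * e)"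
      unfolding Dh_def using that e c \<delta> dd by (intro Dbump_far) (auto simp: dd_def)
    also have "\<dots> = far" unfolding far_def C_def by (simp add: field_simps)
    finally show ?thesis .
  qed
  define Q where "Q t = PP t * (bump c e t)\<^sup>2 + RR t * bump c e t * Dh t + SS t * (Dh t)\<^sup>2" for t
  define U where "U t = (if t \<in> {c..c+e} then V1 else 0) + (if t \<in> {c+e/4..c+e/2} then -\<kappa>*low\<^sup>2 else 0)
      + (if t \<in> {c+\<delta>..b} then M*far\<^sup>2 else 0)" for t
  have QU: "Q t \<le> U t" if t: "t \<in> {a..b}" for t
  proof -
    consider "t \<le> c" | "c \<le> t \<and> t \<le> c + e" | "c + e < t \<and> t \<le> c + \<delta>" | "c + \<delta> < t" by linarith
    then show ?thesis
    proof cases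
      case 1
      have "bump c e t = 0" using 1 e by (intro bump_out) auto
      moreover have "Dh t = 0" unfolding Dh_def using 1 e t by (intro Dbump_zero) auto
      moreover have "U t \<ge> 0" unfolding U_def using 1 e \<delta> V10 M0 by auto
      ultimately show ?thesis by (simp add: Q_def)
    next
      case 2
      have p: "0 \<le> bump c e t" "bump c e t \<le> e^4/16" using bump_bounds[OF e(1)] by auto
      have q: "\<bar>Dh t\<bar> \<le> N" using 2 nearb by auto
      have tS: "t \<in> {c..c+\<delta>}" using 2 e \<delta> by auto
      have T1: "PP t * (bump c e t)\<^sup>2 \<le> M*(e^4/16)\<^sup>2"
      proof -
        have "PP t * (bump c e t)\<^sup>2 \<le> \<bar>PP t\<bar> * (bump c e t)\<^sup>2" by (simp add: abs_le_iff mult_right_mono)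
        also have "\<dots> \<le> M * (e^4/16)\<^sup>2" using MP[OF t] p by (intro mult_mono power_mono) auto
        finally show ?thesis .
      qed
      have T2: "RR t * bump c e t * Dh t \<le> M*(e^4/16)*N"
      proof -
        have "RR t * bump c e t * Dh t \<le> \<bar>RR t\<bar> * \<bar>bump c e t\<bar> * \<bar>Dh t\<bar>"
          by (metis abs_ge_self abs_mult)
        also have "\<dots> \<le> M*(e^4/16)*N" using MR[OF t] p q M0 by (intro mult_mono) auto
        finally show ?thesis .
      qed
      have T3: "SS t * (Dh t)\<^sup>2 \<le> (if t \<in> {c+e/4..c+e/2} then -\<kappa>*low\<^sup>2 else 0)"
      proof (cases "t \<in> {c+e/4..c+e/2}")
        case True
        have "low\<^sup>2 \<le> (Dh t)\<^sup>2" using lowb[of t] True low0 by (intro power_mono) auto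
        have "SS t * (Dh t)\<^sup>2 \<le> -\<kappa> * (Dh t)\<^sup>2"
          using SSneg[OF tS] by (intro mult_right_mono) auto
        also have "\<dots> \<le> -\<kappa> * low\<^sup>2" using \<open>low\<^sup>2 \<le> (Dh t)\<^sup>2\<close> \<kappa> by simp
        finally have "SS t * (Dh t)\<^sup>2 \<le> -\<kappa> * low\<^sup>2" .
        then show ?thesis by (subst if_P[OF True])
      next
        case False
        have "SS t * (Dh t)\<^sup>2 \<le> 0" using SSneg[OF tS] \<kappa> by (simp add: mult_nonpos_nonneg)
        then show ?thesis by (subst if_not_P[OF False])
      qed
      have "t \<notin> {c+\<delta>..b}" using 2 e \<delta> by auto
      then have "U t = V1 + (if t \<in> {c+e/4..c+e/2} then -\<kappa>*low\<^sup>2 else 0)" unfolding U_def using 2 by auto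
      then show ?thesis unfolding Q_def V1_def using T1 T2 T3 by linarith
    next
      case 3
      have "bump c e t = 0" using 3 e by (intro bump_out) auto
      moreover have "SS t * (Dh t)\<^sup>2 \<le> 0" using SSneg[of t] 3 e \<kappa> by (simp add: mult_nonpos_nonneg)
      moreover have "U t \<ge> 0" unfolding U_def using 3 e \<delta> M0 by auto
      ultimately show ?thesis by (simp add: Q_def)
    next
      case 4
      have "bump c e t = 0" using 4 e \<delta> by (intro bump_out) auto
      moreover have "SS t * (Dh t)\<^sup>2 \<le> M * far\<^sup>2"
      proof -
        have "SS t * (Dh t)\<^sup>2 \<le> \<bar>SS t\<bar> * (Dh t)\<^sup>2" by (simp add: abs_le_iff mult_right_mono)
        also have "\<dots> \<le> M * far\<^sup>2" using MS[OF t] farb[of t] 4 t M0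
          by (intro mult_mono) (auto simp: abs_le_square_iff[symmetric] intro: power_mono)
        finally show ?thesis .
      qed
      moreover have "U t = M * far\<^sup>2" unfolding U_def using 4 e \<delta> t by auto
      ultimately show ?thesis by (simp add: Q_def)
    qed
  qed
  have sv: "integral {a..b} Q \<ge> 0"
  proof -
    have "bump c e a = 0" "bump c e b = 0" using c e \<delta> by (auto intro: bump_out)
    moreover have "Q = (\<lambda>t. PP t * (bump c e t)\<^sup>2 + RR t * bump c e t * caputo_left a b \<alpha> \<rho> (bump c e) t
             + SS t * (caputo_left a b \<alpha> \<rho> (bump c e) t)\<^sup>2)" by (rule ext) (simp add: Q_def Dh_def)
    ultimately show ?thesis using second_var[OF bump'_cont bump_d] by simp
  qed
  have Qi: "(Q has_integral integral {a..b} Q) {a..b}"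
  proof -
    have "continuous_on {a..b} (\<lambda>t. bump c e t)"
      using bump_deriv by (meson DERIV_continuous continuous_at_imp_continuous_on)
    moreover have "continuous_on {a..b} Dh" unfolding Dh_def
      using caputo_props(1)[OF bump'_cont bump_d] by (simp add: o_def)
    ultimately have "continuous_on {a..b} Q" unfolding Q_def
      by (intro continuous_intros PRS_cont)
    then show ?thesis using integrable_continuous_interval by (simp add: has_integral_integral)
  qed
  have Ui: "(U has_integral (V1 * e + (-\<kappa>*low\<^sup>2) * (e/4) + M*far\<^sup>2 * (b - (c+\<delta>)))) {a..b}"
  proof -
    have i1: "((\<lambda>t. if t \<in> {c..c+e} then V1 else 0) has_integral V1 * ((c+e) - c)) {a..b}"
      using c e \<delta> by (intro ind_int) auto
    have i2: "((\<lambda>t. if t \<in> {c+e/4..c+e/2} then -\<kappa>*low\<^sup>2 else 0) has_integral (-\<kappa>*low\<^sup>2) * ((c+e/2) - (c+e/4))) {a..b}"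
      using c e \<delta> by (intro ind_int) auto
    have i3: "((\<lambda>t. if t \<in> {c+\<delta>..b} then M*far\<^sup>2 else 0) has_integral M*far\<^sup>2 * (b - (c+\<delta>))) {a..b}"
      using c e \<delta> by (intro ind_int) auto
    from has_integral_add[OF has_integral_add[OF i1 i2] i3] show ?thesis
      unfolding U_def by simp
  qed
  have "integral {a..b} Q \<le> V1 * e + (-\<kappa>*low\<^sup>2) * (e/4) + M*far\<^sup>2 * (b - (c+\<delta>))"
    by (rule has_integral_le[OF Qi Ui QU])
  also have "\<dots> \<le> V1 * e + (-\<kappa>*low\<^sup>2) * (e/4) + M*far\<^sup>2 * (b - a)"
    using c \<delta> M0 by (intro add_left_mono mult_left_mono) auto
  also have "\<dots> < 0"
  proof -
    have "V1 * e + (-\<kappa>*low\<^sup>2) * (e/4) + M*far\<^sup>2 * (b - a) =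
      M*(e^4/16)\<^sup>2*e + M*(e^4/16)*(A*(e^3*e powr (1-\<alpha>)))*e - \<kappa>*(B*((e/2) powr (-\<alpha>)*e^4))\<^sup>2*(e/4)
       + M*(C*(e*e^3*e))\<^sup>2*(b - a)"
      unfolding V1_def N_def low_def far_def by (simp only: distrib_right mult_minus_left diff_conv_add_uminus mult.assoc)
    then show ?thesis using fin[OF e(1) e(2)] by simp
  qed
  finally show False using sv by simp
qed

end


theorem mainTheorem7:
  fixes a b \<alpha> \<rho> xa xb :: real
    and L L2 L3 L22 L23 L32 L33 :: "real \<Rightarrow> real \<Rightarrow> real \<Rightarrow> real"
    and x :: "real \<Rightarrow> real"
  assumes "0 < a" "a < b" "0 < \<alpha>" "\<alpha> < 1" "0 < \<rho>"
    and L_cont: "continuous_on ({a..b} \<times> UNIV \<times> UNIV) (\<lambda>(t, u, v). L t u v)"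
    and L2: "\<And>t u v. t \<in> {a..b} \<Longrightarrow> ((\<lambda>u. L t u v) has_real_derivative L2 t u v) (at u)"
    and L3: "\<And>t u v. t \<in> {a..b} \<Longrightarrow> ((\<lambda>v. L t u v) has_real_derivative L3 t u v) (at v)"
    and L2_cont: "continuous_on ({a..b} \<times> UNIV \<times> UNIV) (\<lambda>(t, u, v). L2 t u v)"
    and L3_cont: "continuous_on ({a..b} \<times> UNIV \<times> UNIV) (\<lambda>(t, u, v). L3 t u v)"
    and D_right: "\<And>y. C1_on a b y \<Longrightarrow>
        RL_right_continuous a b \<alpha> \<rho> (\<lambda>t. L3 t (y t) (caputo_left a b \<alpha> \<rho> y t))"
    and min: "local_minimizer a b \<alpha> \<rho> L (U_set a b xa xb) x"
    and L22: "\<And>t u v. t \<in> {a..b} \<Longrightarrow> ((\<lambda>u. L2 t u v) has_real_derivative L22 t u v) (at u)"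
    and L23: "\<And>t u v. t \<in> {a..b} \<Longrightarrow> ((\<lambda>v. L2 t u v) has_real_derivative L23 t u v) (at v)"
    and L32: "\<And>t u v. t \<in> {a..b} \<Longrightarrow> ((\<lambda>u. L3 t u v) has_real_derivative L32 t u v) (at u)"
    and L33: "\<And>t u v. t \<in> {a..b} \<Longrightarrow> ((\<lambda>v. L3 t u v) has_real_derivative L33 t u v) (at v)"
    and L22_cont: "continuous_on ({a..b} \<times> UNIV \<times> UNIV) (\<lambda>(t, u, v). L22 t u v)"
    and L23_cont: "continuous_on ({a..b} \<times> UNIV \<times> UNIV) (\<lambda>(t, u, v). L23 t u v)"
    and L32_cont: "continuous_on ({a..b} \<times> UNIV \<times> UNIV) (\<lambda>(t, u, v). L32 t u v)"
    and L33_cont: "continuous_on ({a..b} \<times> UNIV \<times> UNIV) (\<lambda>(t, u, v). L33 t u v)"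
  shows "\<forall>t\<in>{a..b}. L33 t (x t) (caputo_left a b \<alpha> \<rho> x t) \<ge> 0"
proof -
  interpret mt a b \<alpha> \<rho> L L2 L3 L22 L23 L32 L33 x xa xb
    by unfold_locales (use assms in auto)
  from legendre show ?thesis by (simp add: SS_def Dx_def)
qed

end
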